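(* Let $(\mathcal X_S,\mathcal X_O,\mathcal X_A,\mathfrak p,\mathbf r)$ be a POMDP and $T\in\mathbb Z_+$. The linear relaxation of the MILP is equivalent to the MDP approximation LP: from any feasible solution of either one can build a feasible solution of the other with the same objective value; in particular $z^*_{\mathrm R}=v^*_{\mathrm{MDP}}$. Moreover $$z^*_{\mathrm{MILP}}\le v^*_{\mathrm{his}}\le z^*_{\mathrm R^{\mathrm c}}\le z^*_{\mathrm R}=v^*_{\mathrm{MDP}}.$$
   Context: A POMDP has finite spaces $\mathcal X_S,\mathcal X_O,\mathcal X_A$, initial distribution $p(s)$, emissions $p(o|s)$, transitions $p(s'|s,a)$, reward $r(s,a,s')$; $T$ is a horizon. A history-dependent policy is $\delta=(\delta^t_{a|h})$, $h\in(\mathcal X_O\times\mathcal X_A)^{t-1}\times\mathcal X_O$, $\delta^t_{a|h}\ge0$, $\sum_a\delta^t_{a|h}=1$; it induces $\mathbb P_\delta$ with $\mathbb P_\delta(\text{trajectory})=p(s_1)\prod_{t=1}^T p(o_t|s_t)p(s_{t+1}|s_t,a_t)\delta^t_{a_t|h_t}$, $h_t=(o_1,a_1,\dots,a_{t-1},o_t)$; $v^*_{\mathrm{his}}$ is the maximum of $\mathbb E_\delta[\sum_{t=1}^T r(S_t,A_t,S_{t+1})]$ over such policies. $\mathcal Q^{\mathrm d}$: pairs $(\mu,\delta)$ with $\delta^t_{a|o}\in\{0,1\}$, $\sum_a\delta^t_{a|o}=1$, nonnegative $\mu=((\mu^1_s),(\mu^t_{soa}),(\mu^t_{sas'}))$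 with (i) $\mu^1_s=p(s)$; (ii) $\sum_{o,a}\mu^t_{soa}=\nu^t_s$ where $\nu^1_s=\mu^1_s$, $\nu^t_s=\sum_{s'',a''}\mu^{t-1}_{s''a''s}$ ($t\ge2$); (iii) $\sum_{\bar s}\mu^t_{sa\bar s}=\sum_o\mu^t_{soa}$; (iv) $\mu^t_{sas'}=p(s'|s,a)\sum_{\bar s}\mu^t_{sa\bar s}$; (McCormick) $\mu^t_{soa}\le p(o|s)\nu^t_s$, $\mu^t_{soa}\le\delta^t_{a|o}$, $\mu^t_{soa}\ge p(o|s)\nu^t_s+\delta^t_{a|o}-1$. The MILP maximizes $\sum_t\sum_{s,a,s'}r(s,a,s')\mu^t_{sas'}$ over $\mathcal Q^{\mathrm d}$, value $z^*_{\mathrm{MILP}}$. $z^*_{\mathrm R}$ is the value of its linear relaxation ($\delta^t_{a|o}\in[0,1]$), and $z^*_{\mathrm R^{\mathrm c}}$ the value of that linear relaxation with additional nonnegative variables $\mu^t_{s'a'soa}$ ($t\ge2$) and the constraints: $\sum_{s',a'}\mu^t_{s'a'soa}=\mu^t_{soa}$; $\sum_a\mu^t_{s'a'soa}=p(o|s)\mu^{t-1}_{s'a's}$; $\mu^t_{s'a'soa}=p(s|s',a',o)\sum_{\bar s}\mu^t_{s'a'\bar soa}$ with $p(s|s',a',o)=p(o|s)p(s|s',a')/\sum_{\bar s}p(o|\bar s)p(\bar s|s',a')$. The MDP approximation LP: maximize $\sum_t\sum_{s,a,s'}r(s,a,s')\mu^t_{sas'}$ over nonnegative $(\mu^1_s),(\mu^t_{sas'})$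 with $\mu^1_s=p(s)$, $\sum_{a,s'}\mu^1_{sas'}=\mu^1_s$, $\sum_{a,s'}\mu^t_{sas'}=\sum_{s'',a''}\mu^{t-1}_{s''a''s}$ for $t\ge2$, and $\mu^t_{sas'}=p(s'|s,a)\sum_{\bar s}\mu^t_{sa\bar s}$; its value is $v^*_{\mathrm{MDP}}$. *)

theory Defs
  imports Complex_Main
begin

text \<open>Finite types 's (states), 'o (observations), 'a (actions).
  p0 s = p(s); pO s ob = p(ob|s); pT s a s' = p(s'|s,a); r s a s' = r(s,a,s').
  Time indices t range over 1..T; variables at other indices are irrelevant.
  delta t a ob = delta^t_{a|ob}.\<close>

definition is_pomdp ::
  "('s::finite \<Rightarrow> real) \<Rightarrow> ('s \<Rightarrow> 'o::finite \<Rightarrow> real) \<Rightarrow> ('s \<Rightarrow> 'a::finite \<Rightarrow> 's \<Rightarrow> real) \<Rightarrow> bool" where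
  "is_pomdp p0 pO pT \<longleftrightarrow>
     (\<forall>s. 0 \<le> p0 s) \<and> (\<Sum>s\<in>UNIV. p0 s) = 1 \<and>
     (\<forall>s ob. 0 \<le> pO s ob) \<and> (\<forall>s. (\<Sum>ob\<in>UNIV. pO s ob) = 1) \<and>
     (\<forall>s a s'. 0 \<le> pT s a s') \<and> (\<forall>s a. (\<Sum>s'\<in>UNIV. pT s a s') = 1)"

definition nu :: "('s::finite \<Rightarrow> real) \<Rightarrow> (nat \<Rightarrow> 's \<Rightarrow> 'a::finite \<Rightarrow> 's \<Rightarrow> real) \<Rightarrow> nat \<Rightarrow> 's \<Rightarrow> real" where
  "nu m1 msas t s = (if t = 1 then m1 s else (\<Sum>s''\<in>UNIV. \<Sum>a''\<in>UNIV. msas (t - 1) s'' a'' s))"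

definition objective :: "nat \<Rightarrow> ('s::finite \<Rightarrow> 'a::finite \<Rightarrow> 's \<Rightarrow> real) \<Rightarrow> (nat \<Rightarrow> 's \<Rightarrow> 'a \<Rightarrow> 's \<Rightarrow> real) \<Rightarrow> real" where
  "objective T r msas = (\<Sum>t=1..T. \<Sum>s\<in>UNIV. \<Sum>a\<in>UNIV. \<Sum>s'\<in>UNIV. r s a s' * msas t s a s')"

definition relax_feasible ::
  "nat \<Rightarrow> ('s::finite \<Rightarrow> real) \<Rightarrow> ('s \<Rightarrow> 'o::finite \<Rightarrow> real) \<Rightarrow> ('s \<Rightarrow> 'a::finite \<Rightarrow> 's \<Rightarrow> real)
   \<Rightarrow> ('s \<Rightarrow> real) \<Rightarrow> (nat \<Rightarrow> 's \<Rightarrow> 'o \<Rightarrow> 'a \<Rightarrow> real) \<Rightarrow> (nat \<Rightarrow> 's \<Rightarrow> 'a \<Rightarrow> 's \<Rightarrow> real)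
   \<Rightarrow> (nat \<Rightarrow> 'a \<Rightarrow> 'o \<Rightarrow> real) \<Rightarrow> bool" where
  "relax_feasible T p0 pO pT m1 msoa msas delta \<longleftrightarrow>
     (\<forall>s. 0 \<le> m1 s) \<and>
     (\<forall>t\<in>{1..T}. \<forall>s ob a. 0 \<le> msoa t s ob a) \<and>
     (\<forall>t\<in>{1..T}. \<forall>s a s'. 0 \<le> msas t s a s') \<and>
     (\<forall>t\<in>{1..T}. \<forall>a ob. 0 \<le> delta t a ob \<and> delta t a ob \<le> 1) \<and>
     (\<forall>t\<in>{1..T}. \<forall>ob. (\<Sum>a\<in>UNIV. delta t a ob) = 1) \<and>
     (\<forall>s. m1 s = p0 s) \<and>
     (\<forall>t\<in>{1..T}. \<forall>s. (\<Sum>ob\<in>UNIV. \<Sum>a\<in>UNIV. msoa t s ob a) = nu m1 msas t s) \<and>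
     (\<forall>t\<in>{1..T}. \<forall>s a. (\<Sum>sb\<in>UNIV. msas t s a sb) = (\<Sum>ob\<in>UNIV. msoa t s ob a)) \<and>
     (\<forall>t\<in>{1..T}. \<forall>s a s'. msas t s a s' = pT s a s' * (\<Sum>sb\<in>UNIV. msas t s a sb)) \<and>
     (\<forall>t\<in>{1..T}. \<forall>s ob a.
        msoa t s ob a \<le> pO s ob * nu m1 msas t s \<and>
        msoa t s ob a \<le> delta t a ob \<and>
        pO s ob * nu m1 msas t s + delta t a ob - 1 \<le> msoa t s ob a)"

definition milp_feasible ::
  "nat \<Rightarrow> ('s::finite \<Rightarrow> real) \<Rightarrow> ('s \<Rightarrow> 'o::finite \<Rightarrow> real) \<Rightarrow> ('s \<Rightarrow> 'a::finite \<Rightarrow> 's \<Rightarrow> real)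
   \<Rightarrow> ('s \<Rightarrow> real) \<Rightarrow> (nat \<Rightarrow> 's \<Rightarrow> 'o \<Rightarrow> 'a \<Rightarrow> real) \<Rightarrow> (nat \<Rightarrow> 's \<Rightarrow> 'a \<Rightarrow> 's \<Rightarrow> real)
   \<Rightarrow> (nat \<Rightarrow> 'a \<Rightarrow> 'o \<Rightarrow> real) \<Rightarrow> bool" where
  "milp_feasible T p0 pO pT m1 msoa msas delta \<longleftrightarrow>
     relax_feasible T p0 pO pT m1 msoa msas delta \<and>
     (\<forall>t\<in>{1..T}. \<forall>a ob. delta t a ob \<in> {0, 1})"

text \<open>p(s|s',a',o); with the convention x/0 = 0 (only relevant when the numerator is 0 too).\<close>
definition pcond :: "('s::finite \<Rightarrow> 'o \<Rightarrow> real) \<Rightarrow> ('s \<Rightarrow> 'a \<Rightarrow> 's \<Rightarrow> real) \<Rightarrow> 's \<Rightarrow> 's \<Rightarrow> 'a \<Rightarrow> 'o \<Rightarrow> real" where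
  "pcond pO pT s s' a' ob = pO s ob * pT s' a' s / (\<Sum>sb\<in>UNIV. pO sb ob * pT s' a' sb)"

text \<open>Feasible set of the strengthened relaxation R^c; mc t s' a' s ob a = mu^t_{s'a'soa}.\<close>
definition relaxc_feasible ::
  "nat \<Rightarrow> ('s::finite \<Rightarrow> real) \<Rightarrow> ('s \<Rightarrow> 'o::finite \<Rightarrow> real) \<Rightarrow> ('s \<Rightarrow> 'a::finite \<Rightarrow> 's \<Rightarrow> real)
   \<Rightarrow> ('s \<Rightarrow> real) \<Rightarrow> (nat \<Rightarrow> 's \<Rightarrow> 'o \<Rightarrow> 'a \<Rightarrow> real) \<Rightarrow> (nat \<Rightarrow> 's \<Rightarrow> 'a \<Rightarrow> 's \<Rightarrow> real)
   \<Rightarrow> (nat \<Rightarrow> 'a \<Rightarrow> 'o \<Rightarrow> real) \<Rightarrow> (nat \<Rightarrow> 's \<Rightarrow> 'a \<Rightarrow> 's \<Rightarrow> 'o \<Rightarrow> 'a \<Rightarrow> real) \<Rightarrow> bool" where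
  "relaxc_feasible T p0 pO pT m1 msoa msas delta mc \<longleftrightarrow>
     relax_feasible T p0 pO pT m1 msoa msas delta \<and>
     (\<forall>t\<in>{2..T}. \<forall>s' a' s ob a. 0 \<le> mc t s' a' s ob a) \<and>
     (\<forall>t\<in>{2..T}. \<forall>s ob a. (\<Sum>s'\<in>UNIV. \<Sum>a'\<in>UNIV. mc t s' a' s ob a) = msoa t s ob a) \<and>
     (\<forall>t\<in>{2..T}. \<forall>s' a' s ob. (\<Sum>a\<in>UNIV. mc t s' a' s ob a) = pO s ob * msas (t - 1) s' a' s) \<and>
     (\<forall>t\<in>{2..T}. \<forall>s' a' s ob a.
        mc t s' a' s ob a = pcond pO pT s s' a' ob * (\<Sum>sb\<in>UNIV. mc t s' a' sb ob a))"

definition mdp_feasible ::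
  "nat \<Rightarrow> ('s::finite \<Rightarrow> real) \<Rightarrow> ('s \<Rightarrow> 'a::finite \<Rightarrow> 's \<Rightarrow> real)
   \<Rightarrow> ('s \<Rightarrow> real) \<Rightarrow> (nat \<Rightarrow> 's \<Rightarrow> 'a \<Rightarrow> 's \<Rightarrow> real) \<Rightarrow> bool" where
  "mdp_feasible T p0 pT m1 msas \<longleftrightarrow>
     (\<forall>s. 0 \<le> m1 s) \<and>
     (\<forall>t\<in>{1..T}. \<forall>s a s'. 0 \<le> msas t s a s') \<and>
     (\<forall>s. m1 s = p0 s) \<and>
     (\<forall>s. (\<Sum>a\<in>UNIV. \<Sum>s'\<in>UNIV. msas 1 s a s') = m1 s) \<and>
     (\<forall>t\<in>{2..T}. \<forall>s. (\<Sum>a\<in>UNIV. \<Sum>s'\<in>UNIV. msas t s a s')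
                      = (\<Sum>s''\<in>UNIV. \<Sum>a''\<in>UNIV. msas (t - 1) s'' a'' s)) \<and>
     (\<forall>t\<in>{1..T}. \<forall>s a s'. msas t s a s' = pT s a s' * (\<Sum>sb\<in>UNIV. msas t s a sb))"

definition z_milp where
  "z_milp T p0 pO pT r = Sup {objective T r msas | m1 msoa msas delta.
      milp_feasible T p0 pO pT m1 msoa msas delta}"

definition z_relax where
  "z_relax T p0 pO pT r = Sup {objective T r msas | m1 msoa msas delta.
      relax_feasible T p0 pO pT m1 msoa msas delta}"

definition z_relaxc where
  "z_relaxc T p0 pO pT r = Sup {objective T r msas | m1 msoa msas delta mc.
      relaxc_feasible T p0 pO pT m1 msoa msas delta mc}"

definition v_mdp where
  "v_mdp T p0 pT r = Sup {objective T r msas | m1 msas. mdp_feasible T p0 pT m1 msas}"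

text \<open>History-dependent policies: dh t h ob a = delta^t_{a|(h,ob)} where the history
  h = [(o_1,a_1),...,(o_{t-1},a_{t-1})] has length t-1 and ob = o_t.\<close>
definition valid_his_policy :: "nat \<Rightarrow> (nat \<Rightarrow> ('o::finite \<times> 'a::finite) list \<Rightarrow> 'o \<Rightarrow> 'a \<Rightarrow> real) \<Rightarrow> bool" where
  "valid_his_policy T dh \<longleftrightarrow>
     (\<forall>t\<in>{1..T}. \<forall>h ob. length h = t - 1 \<longrightarrow>
        (\<forall>a. 0 \<le> dh t h ob a) \<and> (\<Sum>a\<in>UNIV. dh t h ob a) = 1)"

text \<open>Trajectory: ss = [s_1..s_{T+1}], os = [o_1..o_T], as = [a_1..a_T] (0-indexed lists).\<close>
definition traj_prob where
  "traj_prob T p0 pO pT dh ss os as =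
     p0 (ss ! 0) * (\<Prod>i<T. pO (ss ! i) (os ! i) * pT (ss ! i) (as ! i) (ss ! Suc i)
        * dh (Suc i) (zip (take i os) (take i as)) (os ! i) (as ! i))"

definition exp_reward where
  "exp_reward T p0 pO pT r dh =
     (\<Sum>ss\<in>{ss. length ss = Suc T}. \<Sum>os\<in>{os. length os = T}. \<Sum>as\<in>{as. length as = T}.
        traj_prob T p0 pO pT dh ss os as * (\<Sum>i<T. r (ss ! i) (as ! i) (ss ! Suc i)))"

definition v_his where
  "v_his T p0 pO pT r = Sup {exp_reward T p0 pO pT r dh | dh. valid_his_policy T dh}"

end

theory Submission
  imports Defs
begin

definition Lk :: "nat \<Rightarrow> ('s list \<times> 'o list \<times> 'a list) set" where
  "Lk n = {ss. length ss = Suc n} \<times> {os. length os = n} \<times> {as. length as = n}"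

definition extL :: "('s list \<times> 'o list \<times> 'a list) \<Rightarrow> ('s \<times> 'o \<times> 'a) \<Rightarrow> ('s list \<times> 'o list \<times> 'a list)" where
  "extL x y = (case x of (ss,os,as) \<Rightarrow> case y of (s,ob,a) \<Rightarrow> (ss@[s], os@[ob], as@[a]))"

lemma finite_len: "finite {xs :: ('x::finite) list. length xs = n}"
  using finite_lists_length_eq[of "UNIV::'x set" n] by simp

lemma finite_Lk: "finite (Lk n :: ('s::finite list \<times> 'o::finite list \<times> 'a::finite list) set)"
  unfolding Lk_def by (intro finite_cartesian_product finite_len)

lemma extL_inj: "inj (\<lambda>(x,y). extL x y)"
  unfolding inj_def extL_def by auto

lemma extL_image: "(\<lambda>(x,y). extL x y) ` (Lk n \<times> UNIV) = Lk (Suc n)"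
proof
  show "(\<lambda>(x,y). extL x y) ` (Lk n \<times> UNIV) \<subseteq> Lk (Suc n)"
    unfolding Lk_def extL_def by auto
next
  show "Lk (Suc n) \<subseteq> (\<lambda>(x,y). extL x y) ` (Lk n \<times> UNIV)"
  proof
    fix z assume z: "z \<in> Lk (Suc n)"
    obtain ss os as where zz: "z = (ss,os,as)" by (cases z) auto
    have l: "length ss = Suc (Suc n)" "length os = Suc n" "length as = Suc n" using z zz by (auto simp: Lk_def)
    have "ss = butlast ss @ [last ss]" "os = butlast os @ [last os]" "as = butlast as @ [last as]"
      using l by (metis append_butlast_last_id list.size(3) nat.simps(3))+
    then have "z = extL (butlast ss, butlast os, butlast as) (last ss, last os, last as)"
      unfolding zz extL_def by simp
    moreover have "(butlast ss, butlast os, butlast as) \<in> Lk n" using l by (simp add: Lk_def)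
    ultimately show "z \<in> (\<lambda>(x,y). extL x y) ` (Lk n \<times> UNIV)" by force
  qed
qed

lemma sum_Lk_Suc:
  fixes f :: "('s::finite list \<times> 'o::finite list \<times> 'a::finite list) \<Rightarrow> real"
  shows "sum f (Lk (Suc n)) = (\<Sum>x\<in>Lk n. \<Sum>y\<in>UNIV. f (extL x y))"
proof -
  have "(\<Sum>x\<in>Lk n. \<Sum>y\<in>UNIV. f (extL x y)) = (\<Sum>(x,y)\<in>Lk n \<times> UNIV. f (extL x y))"
    by (rule sum.cartesian_product)
  also have "\<dots> = sum f ((\<lambda>(x,y). extL x y) ` (Lk n \<times> UNIV))"
    using sum.reindex[OF inj_on_subset[OF extL_inj subset_UNIV], of f "Lk n \<times> UNIV"]
    by (simp add: case_prod_unfold comp_def)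
  finally show ?thesis by (simp add: extL_image)
qed

definition tpx where
  "tpx p0 pO pT dh n x = (case x of (ss,os,as) \<Rightarrow> traj_prob n p0 pO pT dh ss os as)"

definition stepf where
  "stepf pO pT dh n x y = (case x of (ss,os,as) \<Rightarrow> case y of (s,ob,a) \<Rightarrow>
     pO (last ss) ob * pT (last ss) a s * dh (Suc n) (zip os as) ob a)"

lemma tpx_ext:
  assumes "x \<in> Lk n"
  shows "tpx p0 pO pT dh (Suc n) (extL x y) = tpx p0 pO pT dh n x * stepf pO pT dh n x y"
proof -
  obtain ss os as where x: "x = (ss,os,as)" by (cases x) auto
  obtain s ob a where y: "y = (s,ob,a)" by (cases y) auto
  have l: "length ss = Suc n" "length os = n" "length as = n" using assms x by (auto simp: Lk_def)
  have ls: "last ss = ss ! n" using l by (metis diff_Suc_1 last_conv_nth list.size(3) nat.simps(3))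
  have "(\<Prod>i<n. pO ((ss@[s]) ! i) ((os@[ob]) ! i) * pT ((ss@[s]) ! i) ((as@[a]) ! i) ((ss@[s]) ! Suc i)
        * dh (Suc i) (zip (take i (os@[ob])) (take i (as@[a]))) ((os@[ob]) ! i) ((as@[a]) ! i))
      = (\<Prod>i<n. pO (ss ! i) (os ! i) * pT (ss ! i) (as ! i) (ss ! Suc i)
        * dh (Suc i) (zip (take i os) (take i as)) (os ! i) (as ! i))"
    by (rule prod.cong) (auto simp: l nth_append)
  then show ?thesis
    unfolding tpx_def stepf_def traj_prob_def x y extL_def
    using l by (simp add: ls nth_append mult.assoc)
qed


lemma sum_UNIV3: "sum f (UNIV::('x::finite\<times>'y::finite\<times>'z::finite) set) = (\<Sum>x\<in>UNIV. \<Sum>y\<in>UNIV. \<Sum>z\<in>UNIV. f (x,y,z))"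
proof -
  have "sum f (UNIV::('x\<times>'y\<times>'z) set) = sum f (UNIV \<times> (UNIV \<times> UNIV))" by simp
  also have "\<dots> = (\<Sum>x\<in>UNIV. \<Sum>p\<in>UNIV\<times>UNIV. f (x,p))" by (subst sum.cartesian_product) simp
  also have "\<dots> = (\<Sum>x\<in>UNIV. \<Sum>y\<in>UNIV. \<Sum>z\<in>UNIV. f (x,y,z))"
    by (rule sum.cong[OF refl], subst sum.cartesian_product) simp
  finally show ?thesis .
qed

lemma sum_Lk_0:
  fixes f :: "'s list \<times> 'o list \<times> 'a list \<Rightarrow> 'r::comm_monoid_add"
  shows "sum f (Lk 0) = (\<Sum>s\<in>UNIV. f ([s],[],[]))"
proof -
  have 1: "(Lk 0 :: ('s list \<times> 'o list \<times> 'a list) set) = (\<lambda>s. ([s],[],[])) ` UNIV"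
    unfolding Lk_def by (auto simp: length_Suc_conv image_iff)
  have 2: "inj (\<lambda>s. ([s],[],[]))" by (auto simp: inj_def)
  have "sum f (Lk 0) = sum f ((\<lambda>s. ([s],[],[])) ` UNIV)" using 1 by simp
  also have "\<dots> = sum (f \<circ> (\<lambda>s. ([s],[],[]))) UNIV" by (rule sum.reindex[OF 2])
  finally show ?thesis by (simp add: comp_def)
qed

context
  fixes p0 :: "'s::finite \<Rightarrow> real" and pO :: "'s \<Rightarrow> 'o::finite \<Rightarrow> real"
    and pT :: "'s \<Rightarrow> 'a::finite \<Rightarrow> 's \<Rightarrow> real" and T :: nat
    and dh :: "nat \<Rightarrow> ('o \<times> 'a) list \<Rightarrow> 'o \<Rightarrow> 'a \<Rightarrow> real"
  assumes pom: "is_pomdp p0 pO pT" and val: "valid_his_policy T dh"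
begin

lemma dh_nonneg: "1 \<le> t \<Longrightarrow> t \<le> T \<Longrightarrow> length h = t - 1 \<Longrightarrow> 0 \<le> dh t h ob a"
  using val unfolding valid_his_policy_def by auto

lemma dh_sum: "1 \<le> t \<Longrightarrow> t \<le> T \<Longrightarrow> length h = t - 1 \<Longrightarrow> (\<Sum>a\<in>UNIV. dh t h ob a) = 1"
  using val unfolding valid_his_policy_def by auto

lemma p0_nonneg: "0 \<le> p0 s" and pO_nonneg: "0 \<le> pO s ob" and pT_nonneg: "0 \<le> pT s a s'"
  and p0_sum: "(\<Sum>s\<in>UNIV. p0 s) = 1" and pO_sum: "(\<Sum>ob\<in>UNIV. pO s ob) = 1"
  and pT_sum: "(\<Sum>s'\<in>UNIV. pT s a s') = 1"
  using pom unfolding is_pomdp_def by auto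

lemma stepf_nonneg: "x \<in> Lk n \<Longrightarrow> Suc n \<le> T \<Longrightarrow> 0 \<le> stepf pO pT dh n x y"
  unfolding stepf_def Lk_def
  by (auto split: prod.splits intro!: mult_nonneg_nonneg pO_nonneg pT_nonneg dh_nonneg)

lemma stepf_sum: "x \<in> Lk n \<Longrightarrow> Suc n \<le> T \<Longrightarrow> (\<Sum>y\<in>UNIV. stepf pO pT dh n x y) = 1"
proof -
  assume x: "x \<in> Lk n" and n: "Suc n \<le> T"
  obtain ss os as where xx: "x = (ss,os,as)" by (cases x) auto
  have l: "length (zip os as) = n" using x xx by (auto simp: Lk_def)
  define P where "P = pO (last ss)"
  define Q where "Q = pT (last ss)"
  define D where "D = dh (Suc n) (zip os as)"
  have "(\<Sum>y\<in>UNIV. stepf pO pT dh n x y) = (\<Sum>s\<in>UNIV. \<Sum>ob\<in>UNIV. \<Sum>a\<in>UNIV. P ob * Q a s * D ob a)"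
    unfolding sum_UNIV3 stepf_def xx P_def Q_def D_def by simp
  also have "\<dots> = (\<Sum>ob\<in>UNIV. \<Sum>s\<in>UNIV. \<Sum>a\<in>UNIV. P ob * Q a s * D ob a)" by (rule sum.swap)
  also have "\<dots> = (\<Sum>ob\<in>UNIV. \<Sum>a\<in>UNIV. \<Sum>s\<in>UNIV. P ob * Q a s * D ob a)" by (rule sum.cong[OF refl], rule sum.swap)
  also have "\<dots> = (\<Sum>ob\<in>UNIV. \<Sum>a\<in>UNIV. P ob * D ob a * (\<Sum>s\<in>UNIV. Q a s))"
    by (simp add: sum_distrib_left mult.commute mult.left_commute)
  also have "\<dots> = (\<Sum>ob\<in>UNIV. P ob * (\<Sum>a\<in>UNIV. D ob a))"
    by (simp add: Q_def pT_sum sum_distrib_left)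
  also have "\<dots> = 1" using dh_sum[of "Suc n" "zip os as"] n l
    by (simp add: D_def P_def pO_sum)
  finally show ?thesis .
qed

lemma W_nonneg: "x \<in> Lk n \<Longrightarrow> n \<le> T \<Longrightarrow> 0 \<le> tpx p0 pO pT dh n x"
  unfolding tpx_def traj_prob_def Lk_def
  by (auto split: prod.splits intro!: mult_nonneg_nonneg prod_nonneg pO_nonneg pT_nonneg dh_nonneg p0_nonneg)

lemma sum_step:
  "(\<Sum>x\<in>Lk (Suc n). tpx p0 pO pT dh (Suc n) x * G x)
     = (\<Sum>x\<in>Lk n. \<Sum>y\<in>UNIV. tpx p0 pO pT dh n x * stepf pO pT dh n x y * G (extL x y))"
  unfolding sum_Lk_Suc by (intro sum.cong refl) (simp add: tpx_ext)

lemma sum_tail: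
  fixes G :: "'s list \<times> 'o list \<times> 'a list \<Rightarrow> real"
  assumes "\<And>x y. x \<in> Lk m \<Longrightarrow> G (extL x y) = G x" and "Suc m \<le> T"
  shows "(\<Sum>x\<in>Lk (Suc m). tpx p0 pO pT dh (Suc m) x * G x) = (\<Sum>x\<in>Lk m. tpx p0 pO pT dh m x * G x)"
  unfolding sum_step
proof (intro sum.cong refl)
  fix x :: "'s list \<times> 'o list \<times> 'a list" assume x: "x \<in> Lk m"
  have "(\<Sum>y\<in>UNIV. tpx p0 pO pT dh m x * stepf pO pT dh m x y * G (extL x y))
     = tpx p0 pO pT dh m x * G x * (\<Sum>y\<in>UNIV. stepf pO pT dh m x y)"
    by (simp add: assms(1)[OF x] sum_distrib_left mult.commute mult.left_commute)
  then show "(\<Sum>y\<in>UNIV. tpx p0 pO pT dh m x * stepf pO pT dh m x y * G (extL x y)) = tpx p0 pO pT dh m x * G x"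
    using stepf_sum[OF x assms(2)] by simp
qed

lemma total: "n \<le> T \<Longrightarrow> (\<Sum>x\<in>Lk n. tpx p0 pO pT dh n x) = 1"
proof (induction n)
  case 0
  show ?case by (simp add: sum_Lk_0 tpx_def traj_prob_def p0_sum)
next
  case (Suc n)
  have "(\<Sum>x\<in>Lk (Suc n). tpx p0 pO pT dh (Suc n) x * 1) = (\<Sum>x\<in>Lk n. tpx p0 pO pT dh n x * 1)"
    by (rule sum_tail) (use Suc in auto)
  then show ?case using Suc by simp
qed

end

type_synonym ('s,'o,'a) trj = "'s list \<times> 'o list \<times> 'a list"

definition histx :: "('s list \<times> 'o list \<times> 'a list) \<Rightarrow> ('o \<times> 'a) list" where
  "histx x = (case x of (ss,os,as) \<Rightarrow> zip os as)"

definition Pn where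
  "Pn p0 pO pT dh n s = (\<Sum>x\<in>Lk n. tpx p0 pO pT dh n x * (if last (fst x) = s then 1 else 0))"

definition Qn where
  "Qn p0 pO pT dh n s ob a = (\<Sum>x\<in>Lk n. tpx p0 pO pT dh n x *
      (if last (fst x) = s then pO s ob * dh (Suc n) (histx x) ob a else 0))"

definition MSn where
  "MSn p0 pO pT dh n s a s' = (\<Sum>ob\<in>UNIV. Qn p0 pO pT dh n s ob a) * pT s a s'"

definition Kn where
  "Kn p0 pO pT dh n s' a' ob a = (\<Sum>x\<in>Lk n. tpx p0 pO pT dh n x *
      (if last (fst x) = s' then (\<Sum>ob'\<in>UNIV. pO s' ob' * dh (Suc n) (histx x) ob' a'
           * dh (Suc (Suc n)) (histx x @ [(ob',a')]) ob a) else 0))"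

definition MCn where
  "MCn p0 pO pT dh n s' a' s ob a = pO s ob * pT s' a' s * Kn p0 pO pT dh n s' a' ob a"

lemma mult_ind: "(x::real) * (if c then 1 else 0) = (if c then x else 0)" by simp

lemma mult_if0: "(x::real) * (if c then y else 0) = (if c then x*y else 0)"
  "(if c then y else 0) * (x::real) = (if c then y*x else 0)" by simp_all

lemma sum_if_const: "(\<Sum>z\<in>A. if c then f z else (0::real)) = (if c then sum f A else 0)"
  by (cases c) simp_all

lemma histx_ext: "x \<in> Lk n \<Longrightarrow> histx (extL x (s,ob,a)) = histx x @ [(ob,a)]"
  by (auto simp: histx_def extL_def Lk_def split: prod.splits)

lemma last_ext: "last (fst (extL x (s,ob,a))) = s"
  by (auto simp: extL_def split: prod.splits)

lemma stepf_eq: "stepf pO pT dh n x (s,ob,a) = pO (last (fst x)) ob * pT (last (fst x)) a s * dh (Suc n) (histx x) ob a"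
  by (auto simp: stepf_def histx_def split: prod.splits)

lemma histx_len: "x \<in> Lk n \<Longrightarrow> length (histx x) = n"
  by (auto simp: histx_def Lk_def split: prod.splits)

lemma pull3: "(\<Sum>a\<in>A. \<Sum>b\<in>B. \<Sum>c\<in>C. f a b c) = (\<Sum>c\<in>C. \<Sum>a\<in>A. \<Sum>b\<in>B. f a b c)"
proof -
  have "(\<Sum>a\<in>A. \<Sum>b\<in>B. \<Sum>c\<in>C. f a b c) = (\<Sum>a\<in>A. \<Sum>c\<in>C. \<Sum>b\<in>B. f a b c)"
    by (rule sum.cong[OF refl], rule sum.swap)
  also have "\<dots> = (\<Sum>c\<in>C. \<Sum>a\<in>A. \<Sum>b\<in>B. f a b c)" by (rule sum.swap)
  finally show ?thesis .
qed

lemma pull4: "(\<Sum>a\<in>A. \<Sum>b\<in>B. \<Sum>c\<in>C. \<Sum>d\<in>D. f a b c d) = (\<Sum>d\<in>D. \<Sum>a\<in>A. \<Sum>b\<in>B. \<Sum>c\<in>C. f a b c d)"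
proof -
  have "(\<Sum>a\<in>A. \<Sum>b\<in>B. \<Sum>c\<in>C. \<Sum>d\<in>D. f a b c d) = (\<Sum>a\<in>A. \<Sum>d\<in>D. \<Sum>b\<in>B. \<Sum>c\<in>C. f a b c d)"
    by (rule sum.cong[OF refl], rule pull3)
  also have "\<dots> = (\<Sum>d\<in>D. \<Sum>a\<in>A. \<Sum>b\<in>B. \<Sum>c\<in>C. f a b c d)" by (rule sum.swap)
  finally show ?thesis .
qed

lemma pull5: "(\<Sum>a\<in>A. \<Sum>b\<in>B. \<Sum>c\<in>C. \<Sum>d\<in>D. \<Sum>e\<in>E. f a b c d e) = (\<Sum>e\<in>E. \<Sum>a\<in>A. \<Sum>b\<in>B. \<Sum>c\<in>C. \<Sum>d\<in>D. f a b c d e)"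
proof -
  have "(\<Sum>a\<in>A. \<Sum>b\<in>B. \<Sum>c\<in>C. \<Sum>d\<in>D. \<Sum>e\<in>E. f a b c d e) = (\<Sum>a\<in>A. \<Sum>e\<in>E. \<Sum>b\<in>B. \<Sum>c\<in>C. \<Sum>d\<in>D. f a b c d e)"
    by (rule sum.cong[OF refl], rule pull4)
  also have "\<dots> = (\<Sum>e\<in>E. \<Sum>a\<in>A. \<Sum>b\<in>B. \<Sum>c\<in>C. \<Sum>d\<in>D. f a b c d e)" by (rule sum.swap)
  finally show ?thesis .
qed

context
  fixes p0 :: "'s::finite \<Rightarrow> real" and pO :: "'s \<Rightarrow> 'o::finite \<Rightarrow> real"
    and pT :: "'s \<Rightarrow> 'a::finite \<Rightarrow> 's \<Rightarrow> real" and T :: nat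
    and dh :: "nat \<Rightarrow> ('o \<times> 'a) list \<Rightarrow> 'o \<Rightarrow> 'a \<Rightarrow> real"
  assumes pom: "is_pomdp p0 pO pT" and val: "valid_his_policy T dh"
begin

abbreviation "W \<equiv> tpx p0 pO pT dh"

lemmas sstep = sum_step[OF pom val] and stail = sum_tail[OF pom val] and stotal = total[OF pom val]
  and sfsum = stepf_sum[OF pom val] and sfnn = stepf_nonneg[OF pom val] and Wnn = W_nonneg[OF pom val]
  and dhnn = dh_nonneg[OF pom val] and dhsum = dh_sum[OF pom val]
  and pOnn = pO_nonneg[OF pom val] and pTnn = pT_nonneg[OF pom val]
  and pOsum = pO_sum[OF pom val] and pTsum = pT_sum[OF pom val]

lemma P0: "Pn p0 pO pT dh 0 s = p0 s"
  unfolding Pn_def sum_Lk_0 by (simp add: tpx_def traj_prob_def mult_ind)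

lemma Ptot: "n \<le> T \<Longrightarrow> (\<Sum>s\<in>UNIV. Pn p0 pO pT dh n s) = 1"
proof -
  assume n: "n \<le> T"
  have "(\<Sum>s\<in>UNIV. Pn p0 pO pT dh n s) = (\<Sum>x\<in>Lk n. \<Sum>s\<in>UNIV. W n x * (if last (fst x) = s then 1 else 0))"
    unfolding Pn_def by (rule sum.swap)
  also have "\<dots> = (\<Sum>x\<in>Lk n. W n x)" by (simp add: mult_ind)
  finally show ?thesis using stotal[OF n] by simp
qed

lemma Pstep: "Pn p0 pO pT dh (Suc n) s = (\<Sum>s0\<in>UNIV. \<Sum>a\<in>UNIV. MSn p0 pO pT dh n s0 a s)"
proof -
  have "Pn p0 pO pT dh (Suc n) s = (\<Sum>x\<in>Lk n. \<Sum>y\<in>UNIV. W n x * stepf pO pT dh n x y *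
           (if last (fst (extL x y)) = s then 1 else 0))"
    unfolding Pn_def by (rule sstep)
  also have "\<dots> = (\<Sum>x\<in>Lk n. \<Sum>ob\<in>UNIV. \<Sum>a\<in>UNIV. W n x * (pO (last (fst x)) ob * pT (last (fst x)) a s * dh (Suc n) (histx x) ob a))"
    by (simp add: sum_UNIV3 last_ext stepf_eq mult_ind mult.assoc sum_if_const)
  also have "\<dots> = (\<Sum>s0\<in>UNIV. \<Sum>a\<in>UNIV. \<Sum>ob\<in>UNIV. \<Sum>x\<in>Lk n. W n x *
           (if last (fst x) = s0 then pO s0 ob * dh (Suc n) (histx x) ob a else 0) * pT s0 a s)"
  proof -
    have "(\<Sum>s0\<in>UNIV. \<Sum>a\<in>UNIV. \<Sum>ob\<in>UNIV. \<Sum>x\<in>Lk n. W n x *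
           (if last (fst x) = s0 then pO s0 ob * dh (Suc n) (histx x) ob a else 0) * pT s0 a s)
        = (\<Sum>x\<in>Lk n. \<Sum>s0\<in>UNIV. \<Sum>a\<in>UNIV. \<Sum>ob\<in>UNIV. W n x *
           (if last (fst x) = s0 then pO s0 ob * dh (Suc n) (histx x) ob a else 0) * pT s0 a s)"
      by (simp add: sum.swap[of _ UNIV "Lk n"])
    also have "\<dots> = (\<Sum>x\<in>Lk n. \<Sum>a\<in>UNIV. \<Sum>ob\<in>UNIV. W n x *
           (pO (last (fst x)) ob * dh (Suc n) (histx x) ob a) * pT (last (fst x)) a s)"
      by (simp add: mult_if0 sum_if_const)
    also have "\<dots> = (\<Sum>x\<in>Lk n. \<Sum>ob\<in>UNIV. \<Sum>a\<in>UNIV. W n x * (pO (last (fst x)) ob * pT (last (fst x)) a s * dh (Suc n) (histx x) ob a))"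
      by (intro sum.cong refl, subst sum.swap) (simp add: ac_simps)
    finally show ?thesis by simp
  qed
  also have "\<dots> = (\<Sum>s0\<in>UNIV. \<Sum>a\<in>UNIV. MSn p0 pO pT dh n s0 a s)"
    unfolding MSn_def Qn_def by (simp add: sum_distrib_right)
  finally show ?thesis .
qed


lemma Lk_len: "x \<in> Lk n \<Longrightarrow> length (fst x) = Suc n \<and> length (fst (snd x)) = n \<and> length (snd (snd x)) = n"
  by (auto simp: Lk_def)

lemma QP: "Suc n \<le> T \<Longrightarrow> (\<Sum>a\<in>UNIV. Qn p0 pO pT dh n s ob a) = pO s ob * Pn p0 pO pT dh n s"
proof -
  assume n: "Suc n \<le> T"
  have "(\<Sum>a\<in>UNIV. Qn p0 pO pT dh n s ob a) = (\<Sum>x\<in>Lk n. \<Sum>a\<in>UNIV. W n x *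
      (if last (fst x) = s then pO s ob * dh (Suc n) (histx x) ob a else 0))"
    unfolding Qn_def by (rule sum.swap)
  also have "\<dots> = (\<Sum>x\<in>Lk n. pO s ob * (W n x * (if last (fst x) = s then 1 else 0)))"
  proof (intro sum.cong refl)
    fix x :: "('s,'o,'a) trj" assume x: "x \<in> Lk n"
    have "(\<Sum>a\<in>UNIV. dh (Suc n) (histx x) ob a) = 1" using dhsum[of "Suc n" "histx x"] n histx_len[OF x] by simp
    then show "(\<Sum>a\<in>UNIV. W n x * (if last (fst x) = s then pO s ob * dh (Suc n) (histx x) ob a else 0))
       = pO s ob * (W n x * (if last (fst x) = s then 1 else 0))"
      by (simp add: mult_if0 sum_if_const flip: sum_distrib_left)
  qed
  finally show ?thesis unfolding Pn_def by (simp add: sum_distrib_left)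
qed

lemma QPP: "Suc n \<le> T \<Longrightarrow> (\<Sum>ob\<in>UNIV. \<Sum>a\<in>UNIV. Qn p0 pO pT dh n s ob a) = Pn p0 pO pT dh n s"
  by (simp add: QP pOsum flip: sum_distrib_right)

lemma MC1: "(\<Sum>s'\<in>UNIV. \<Sum>a'\<in>UNIV. MCn p0 pO pT dh n s' a' s ob a) = Qn p0 pO pT dh (Suc n) s ob a"
proof -
  have "Qn p0 pO pT dh (Suc n) s ob a = (\<Sum>x\<in>Lk n. \<Sum>y\<in>UNIV. W n x * stepf pO pT dh n x y *
           (if last (fst (extL x y)) = s then pO s ob * dh (Suc (Suc n)) (histx (extL x y)) ob a else 0))"
    unfolding Qn_def by (rule sstep)
  also have "\<dots> = (\<Sum>x\<in>Lk n. \<Sum>ob'\<in>UNIV. \<Sum>a'\<in>UNIV. W n x * (pO (last (fst x)) ob' * pT (last (fst x)) a' s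
        * dh (Suc n) (histx x) ob' a') * (pO s ob * dh (Suc (Suc n)) (histx x @ [(ob',a')]) ob a))"
    by (intro sum.cong refl) (simp add: sum_UNIV3 last_ext stepf_eq histx_ext mult_if0 sum_if_const)
  also have "\<dots> = (\<Sum>x\<in>Lk n. \<Sum>a'\<in>UNIV. \<Sum>ob'\<in>UNIV. W n x * (pO (last (fst x)) ob' * pT (last (fst x)) a' s
        * dh (Suc n) (histx x) ob' a') * (pO s ob * dh (Suc (Suc n)) (histx x @ [(ob',a')]) ob a))"
    by (intro sum.cong refl) (rule sum.swap)
  also have "\<dots> = (\<Sum>x\<in>Lk n. \<Sum>s'\<in>UNIV. \<Sum>a'\<in>UNIV. pO s ob * pT s' a' s * (W n x *
      (if last (fst x) = s' then (\<Sum>ob'\<in>UNIV. pO s' ob' * dh (Suc n) (histx x) ob' a'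
           * dh (Suc (Suc n)) (histx x @ [(ob',a')]) ob a) else 0)))"
    by (intro sum.cong refl) (simp add: mult_if0 sum_if_const sum_distrib_left ac_simps)
  also have "\<dots> = (\<Sum>s'\<in>UNIV. \<Sum>a'\<in>UNIV. MCn p0 pO pT dh n s' a' s ob a)"
    unfolding MCn_def Kn_def sum_distrib_left
    by (simp add: sum.swap[of _ UNIV "Lk n"])
  finally show ?thesis by simp
qed

lemma MC2: "Suc (Suc n) \<le> T \<Longrightarrow>
   (\<Sum>a\<in>UNIV. MCn p0 pO pT dh n s' a' s ob a) = pO s ob * MSn p0 pO pT dh n s' a' s"
proof -
  assume n: "Suc (Suc n) \<le> T"
  have "(\<Sum>a\<in>UNIV. Kn p0 pO pT dh n s' a' ob a) = (\<Sum>x\<in>Lk n. \<Sum>a\<in>UNIV. W n x *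
      (if last (fst x) = s' then (\<Sum>ob'\<in>UNIV. pO s' ob' * dh (Suc n) (histx x) ob' a'
           * dh (Suc (Suc n)) (histx x @ [(ob',a')]) ob a) else 0))"
    unfolding Kn_def by (rule sum.swap)
  also have "\<dots> = (\<Sum>x\<in>Lk n. \<Sum>ob'\<in>UNIV. W n x *
      (if last (fst x) = s' then pO s' ob' * dh (Suc n) (histx x) ob' a' else 0))"
  proof (intro sum.cong refl)
    fix x :: "('s,'o,'a) trj" assume x: "x \<in> Lk n"
    have h: "\<And>ob'. (\<Sum>a\<in>UNIV. dh (Suc (Suc n)) (histx x @ [(ob',a')]) ob a) = 1"
      using dhsum n histx_len[OF x] by simp
    have "(\<Sum>a\<in>UNIV. \<Sum>ob'\<in>UNIV. pO s' ob' * dh (Suc n) (histx x) ob' a'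
           * dh (Suc (Suc n)) (histx x @ [(ob',a')]) ob a)
        = (\<Sum>ob'\<in>UNIV. \<Sum>a\<in>UNIV. pO s' ob' * dh (Suc n) (histx x) ob' a'
           * dh (Suc (Suc n)) (histx x @ [(ob',a')]) ob a)" by (rule sum.swap)
    also have "\<dots> = (\<Sum>ob'\<in>UNIV. pO s' ob' * dh (Suc n) (histx x) ob' a')"
      by (simp add: h flip: sum_distrib_left)
    finally have e: "(\<Sum>a\<in>UNIV. \<Sum>ob'\<in>UNIV. pO s' ob' * dh (Suc n) (histx x) ob' a'
           * dh (Suc (Suc n)) (histx x @ [(ob',a')]) ob a) = (\<Sum>ob'\<in>UNIV. pO s' ob' * dh (Suc n) (histx x) ob' a')" .
    show "(\<Sum>a\<in>UNIV. W n x *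
      (if last (fst x) = s' then (\<Sum>ob'\<in>UNIV. pO s' ob' * dh (Suc n) (histx x) ob' a'
           * dh (Suc (Suc n)) (histx x @ [(ob',a')]) ob a) else 0)) = (\<Sum>ob'\<in>UNIV. W n x *
      (if last (fst x) = s' then pO s' ob' * dh (Suc n) (histx x) ob' a' else 0))"
      by (simp add: mult_if0 sum_if_const e flip: sum_distrib_left)
  qed
  also have "\<dots> = (\<Sum>ob'\<in>UNIV. Qn p0 pO pT dh n s' ob' a')"
    unfolding Qn_def by (rule sum.swap)
  finally have e: "(\<Sum>a\<in>UNIV. Kn p0 pO pT dh n s' a' ob a) = (\<Sum>ob'\<in>UNIV. Qn p0 pO pT dh n s' ob' a')" .
  have "(\<Sum>a\<in>UNIV. MCn p0 pO pT dh n s' a' s ob a) = pO s ob * pT s' a' s * (\<Sum>a\<in>UNIV. Kn p0 pO pT dh n s' a' ob a)"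
    by (simp add: MCn_def sum_distrib_left)
  then show ?thesis using e by (simp add: MSn_def ac_simps)
qed


lemma last_nth: "length xs = Suc n \<Longrightarrow> last xs = xs ! n"
  by (metis diff_Suc_1 last_conv_nth list.size(3) nat.simps(3))

definition Ri :: "('s \<Rightarrow> 'a \<Rightarrow> 's \<Rightarrow> real) \<Rightarrow> nat \<Rightarrow> ('s,'o,'a) trj \<Rightarrow> real" where
  "Ri r i x = (case x of (ss,os,as) \<Rightarrow> r (ss!i) (as!i) (ss!Suc i))"

lemma Ri_ext: "x \<in> Lk m \<Longrightarrow> Suc i \<le> m \<Longrightarrow> Ri r i (extL x y) = Ri r i x"
  by (auto simp: Ri_def extL_def Lk_def nth_append split: prod.splits)

lemma exp_eq: "exp_reward T p0 pO pT r dh = (\<Sum>i<T. \<Sum>x\<in>Lk T. W T x * Ri r i x)"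
proof -
  have "exp_reward T p0 pO pT r dh = (\<Sum>x\<in>Lk T. W T x * (\<Sum>i<T. Ri r i x))"
    unfolding exp_reward_def Lk_def
    by (simp add: sum.cartesian_product tpx_def Ri_def case_prod_unfold)
  also have "\<dots> = (\<Sum>i<T. \<Sum>x\<in>Lk T. W T x * Ri r i x)"
    by (simp add: sum_distrib_left sum.swap[of _ "Lk T"])
  finally show ?thesis .
qed

lemma tailN: "Suc i \<le> m \<Longrightarrow> m \<le> T \<Longrightarrow>
   (\<Sum>x\<in>Lk m. W m x * Ri r i x) = (\<Sum>x\<in>Lk (Suc i). W (Suc i) x * Ri r i x)"
proof (induction m rule: dec_induct)
  case base then show ?case by simp
next
  case (step m)
  have "(\<Sum>x\<in>Lk (Suc m). W (Suc m) x * Ri r i x) = (\<Sum>x\<in>Lk m. W m x * Ri r i x)"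
    by (rule stail) (use step Ri_ext in auto)
  then show ?case using step by simp
qed

lemma obj_step: "(\<Sum>x\<in>Lk (Suc i). W (Suc i) x * Ri r i x)
   = (\<Sum>s\<in>UNIV. \<Sum>a\<in>UNIV. \<Sum>s'\<in>UNIV. r s a s' * MSn p0 pO pT dh i s a s')"
proof -
  have ri: "x \<in> Lk i \<Longrightarrow> Ri r i (extL x (s'',ob,a)) = r (last (fst x)) a s''" for x s'' ob a
  proof -
    assume x: "x \<in> Lk i"
    obtain ss os as where xx: "x = (ss,os,as)" by (cases x) auto
    have l: "length ss = Suc i" "length as = i" using x xx by (auto simp: Lk_def)
    show ?thesis using l last_nth[OF l(1)] by (simp add: xx Ri_def extL_def nth_append)
  qed
  have "(\<Sum>x\<in>Lk (Suc i). W (Suc i) x * Ri r i x) = (\<Sum>x\<in>Lk i. \<Sum>y\<in>UNIV. W i x * stepf pO pT dh i x y * Ri r i (extL x y))"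
    by (rule sstep)
  also have "\<dots> = (\<Sum>x\<in>Lk i. \<Sum>s''\<in>UNIV. \<Sum>ob\<in>UNIV. \<Sum>a\<in>UNIV. W i x * (pO (last (fst x)) ob * pT (last (fst x)) a s'' * dh (Suc i) (histx x) ob a) * r (last (fst x)) a s'')"
    by (intro sum.cong refl) (simp add: sum_UNIV3 stepf_eq ri)
  also have "\<dots> = (\<Sum>x\<in>Lk i. \<Sum>a\<in>UNIV. \<Sum>s''\<in>UNIV. \<Sum>ob\<in>UNIV. W i x * (pO (last (fst x)) ob * pT (last (fst x)) a s'' * dh (Suc i) (histx x) ob a) * r (last (fst x)) a s'')"
  proof (intro sum.cong refl)
    fix x :: "('s,'o,'a) trj"
    show "(\<Sum>s''\<in>UNIV. \<Sum>ob\<in>UNIV. \<Sum>a\<in>UNIV. W i x * (pO (last (fst x)) ob * pT (last (fst x)) a s'' * dh (Suc i) (histx x) ob a) * r (last (fst x)) a s'')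
      = (\<Sum>a\<in>UNIV. \<Sum>s''\<in>UNIV. \<Sum>ob\<in>UNIV. W i x * (pO (last (fst x)) ob * pT (last (fst x)) a s'' * dh (Suc i) (histx x) ob a) * r (last (fst x)) a s'')"
      by (rule pull3)
  qed
  also have "\<dots> = (\<Sum>x\<in>Lk i. \<Sum>s\<in>UNIV. \<Sum>a\<in>UNIV. \<Sum>s'\<in>UNIV. \<Sum>ob\<in>UNIV. W i x *
         (if last (fst x) = s then pO s ob * dh (Suc i) (histx x) ob a else 0) * r s a s' * pT s a s')"
    by (intro sum.cong refl) (simp add: mult_if0 sum_if_const ac_simps)
  also have "\<dots> = (\<Sum>s\<in>UNIV. \<Sum>a\<in>UNIV. \<Sum>s'\<in>UNIV. r s a s' * MSn p0 pO pT dh i s a s')"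
    unfolding MSn_def Qn_def sum_distrib_left sum_distrib_right pull5[where E="Lk i"]
    by (simp add: ac_simps)
  finally show ?thesis .
qed

lemma obj_eq: "exp_reward T p0 pO pT r dh = objective T r (\<lambda>t. MSn p0 pO pT dh (t - 1))"
proof -
  have "exp_reward T p0 pO pT r dh = (\<Sum>i<T. \<Sum>s\<in>UNIV. \<Sum>a\<in>UNIV. \<Sum>s'\<in>UNIV. r s a s' * MSn p0 pO pT dh i s a s')"
    unfolding exp_eq by (intro sum.cong refl) (simp add: tailN obj_step)
  then show ?thesis unfolding objective_def by (simp add: sum.atLeast1_atMost_eq)
qed

end

definition mcd :: "('s::finite \<Rightarrow> 'o \<Rightarrow> 'a::finite \<Rightarrow> real) \<Rightarrow> 'a \<Rightarrow> 'o \<Rightarrow> real" where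
  "mcd \<mu> a ob = (if (\<Sum>s\<in>UNIV. \<Sum>a'\<in>UNIV. \<mu> s ob a') = 0 then (if a = undefined then 1 else 0)
     else (\<Sum>s\<in>UNIV. \<mu> s ob a) / (\<Sum>s\<in>UNIV. \<Sum>a'\<in>UNIV. \<mu> s ob a'))"

lemma mcd_props:
  fixes \<mu> :: "'s::finite \<Rightarrow> 'o::finite \<Rightarrow> 'a::finite \<Rightarrow> real"
  assumes nn: "\<And>s ob a. 0 \<le> \<mu> s ob a" and tot: "(\<Sum>s\<in>UNIV. \<Sum>ob\<in>UNIV. \<Sum>a\<in>UNIV. \<mu> s ob a) \<le> 1"
  shows "0 \<le> mcd \<mu> a ob" "mcd \<mu> a ob \<le> 1" "(\<Sum>a\<in>UNIV. mcd \<mu> a ob) = 1"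
    "\<mu> s ob a \<le> mcd \<mu> a ob" "(\<Sum>a'\<in>UNIV. \<mu> s ob a') + mcd \<mu> a ob - 1 \<le> \<mu> s ob a"
proof -
  define D where "D = (\<Sum>s\<in>UNIV. \<Sum>a'\<in>UNIV. \<mu> s ob a')"
  define N where "N = (\<lambda>a. \<Sum>s\<in>UNIV. \<mu> s ob a)"
  define m where "m = (\<lambda>s. \<Sum>a'\<in>UNIV. \<mu> s ob a')"
  have m_nn: "\<And>s. 0 \<le> m s" unfolding m_def using nn by (simp add: sum_nonneg)
  have mu_m: "\<And>s a. \<mu> s ob a \<le> m s" unfolding m_def using nn by (intro member_le_sum) auto
  have D_m: "\<And>s. m s \<le> D" unfolding D_def m_def[symmetric] using m_nn by (intro member_le_sum) auto
  have "D = (\<Sum>ob'\<in>{ob}. \<Sum>s\<in>UNIV. \<Sum>a'\<in>UNIV. \<mu> s ob' a')" by (simp add: D_def)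
  also have "\<dots> \<le> (\<Sum>ob'\<in>UNIV. \<Sum>s\<in>UNIV. \<Sum>a'\<in>UNIV. \<mu> s ob' a')"
    by (rule sum_mono2) (auto intro!: sum_nonneg nn)
  also have "\<dots> = (\<Sum>s\<in>UNIV. \<Sum>ob\<in>UNIV. \<Sum>a\<in>UNIV. \<mu> s ob a)" by (rule sum.swap)
  finally have D1: "D \<le> 1" using tot by simp
  have mu_N: "\<And>s a. \<mu> s ob a \<le> N a" unfolding N_def using nn by (intro member_le_sum) auto
  have N_nn: "\<And>a. 0 \<le> N a" unfolding N_def using nn by (simp add: sum_nonneg)
  have N_D: "\<And>a. N a \<le> D" unfolding N_def D_def by (intro sum_mono member_le_sum) (auto intro: nn)
  have sumN: "(\<Sum>a\<in>UNIV. N a) = D" unfolding N_def D_def by (rule sum.swap)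
  have DN: "\<And>s a. m s - \<mu> s ob a \<le> D - N a"
  proof -
    fix s a
    have "D - N a = (\<Sum>s\<in>UNIV. m s - \<mu> s ob a)" unfolding D_def N_def m_def by (simp add: sum_subtractf)
    moreover have "m s - \<mu> s ob a \<le> (\<Sum>s\<in>UNIV. m s - \<mu> s ob a)"
      by (rule member_le_sum) (auto simp: mu_m)
    ultimately show "m s - \<mu> s ob a \<le> D - N a" by simp
  qed
  have "0 \<le> mcd \<mu> a ob \<and> mcd \<mu> a ob \<le> 1 \<and> (\<Sum>a\<in>UNIV. mcd \<mu> a ob) = 1 \<and>
    \<mu> s ob a \<le> mcd \<mu> a ob \<and> (\<Sum>a'\<in>UNIV. \<mu> s ob a') + mcd \<mu> a ob - 1 \<le> \<mu> s ob a"
  proof (cases "D = 0")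
    case True
    have z0: "\<mu> s ob a = 0" "m s = 0" using True mu_m[of s a] D_m[of s] nn[of s ob a] m_nn[of s] by auto
    have z: "\<mu> s ob a = 0" "(\<Sum>a'\<in>UNIV. \<mu> s ob a') = 0" using z0 by (simp_all add: m_def)
    have e: "mcd \<mu> a' ob = (if a' = undefined then 1 else 0)" for a'
      using True unfolding mcd_def D_def by simp
    show ?thesis using z by (simp add: e)
  next
    case False
    then have Dp: "0 < D" using D_m[of s] m_nn[of s] by linarith
    have e: "mcd \<mu> a' ob = N a' / D" for a'
      using False unfolding mcd_def D_def N_def by simp
    have 1: "0 \<le> mcd \<mu> a ob" using e N_nn Dp by simp
    have 2: "mcd \<mu> a ob \<le> 1" using e N_D Dp by simp
    have 3: "(\<Sum>a\<in>UNIV. mcd \<mu> a ob) = 1" using Dp by (simp add: e sumN flip: sum_divide_distrib)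
    have "N a \<le> N a / D" using Dp D1 N_nn[of a] by (simp add: le_divide_eq mult_left_le)
    then have 4: "\<mu> s ob a \<le> mcd \<mu> a ob" using mu_N[of s a] e by simp
    have "D - N a \<le> (D - N a) / D" using Dp D1 N_D[of a] by (simp add: le_divide_eq mult_left_le)
    also have "(D - N a) / D = 1 - N a / D" using Dp by (simp add: diff_divide_distrib)
    finally have 5: "(\<Sum>a'\<in>UNIV. \<mu> s ob a') + mcd \<mu> a ob - 1 \<le> \<mu> s ob a"
      using DN[of s a] e by (simp add: m_def)
    show ?thesis using 1 2 3 4 5 by simp
  qed
  then show "0 \<le> mcd \<mu> a ob" "mcd \<mu> a ob \<le> 1" "(\<Sum>a\<in>UNIV. mcd \<mu> a ob) = 1"
    "\<mu> s ob a \<le> mcd \<mu> a ob" "(\<Sum>a'\<in>UNIV. \<mu> s ob a') + mcd \<mu> a ob - 1 \<le> \<mu> s ob a" by auto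
qed

definition msoaF where "msoaF p0 pO pT dh t = Qn p0 pO pT dh (t - 1)"
definition msasF where "msasF p0 pO pT dh t = MSn p0 pO pT dh (t - 1)"
definition deltaF where "deltaF p0 pO pT dh t = mcd (Qn p0 pO pT dh (t - 1))"
definition mcF where "mcF p0 pO pT dh t = MCn p0 pO pT dh (t - 2)"

context
  fixes p0 :: "'s::finite \<Rightarrow> real" and pO :: "'s \<Rightarrow> 'o::finite \<Rightarrow> real"
    and pT :: "'s \<Rightarrow> 'a::finite \<Rightarrow> 's \<Rightarrow> real" and T :: nat
    and dh :: "nat \<Rightarrow> ('o \<times> 'a) list \<Rightarrow> 'o \<Rightarrow> 'a \<Rightarrow> real"
  assumes pom: "is_pomdp p0 pO pT" and val: "valid_his_policy T dh"
begin

lemmas Wnn' = W_nonneg[OF pom val] and dhnn' = dh_nonneg[OF pom val]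
  and pOnn' = pO_nonneg[OF pom val] and pTnn' = pT_nonneg[OF pom val] and p0nn' = p0_nonneg[OF pom val]
  and pTsum' = pT_sum[OF pom val]

lemma Qn_nn: "Suc n \<le> T \<Longrightarrow> 0 \<le> Qn p0 pO pT dh n s ob a"
  unfolding Qn_def
  by (intro sum_nonneg mult_nonneg_nonneg Wnn') (auto intro!: mult_nonneg_nonneg pOnn' dhnn' histx_len)

lemma MSn_nn: "Suc n \<le> T \<Longrightarrow> 0 \<le> MSn p0 pO pT dh n s a s'"
  unfolding MSn_def by (intro mult_nonneg_nonneg sum_nonneg Qn_nn pTnn')

lemma Kn_nn: "Suc (Suc n) \<le> T \<Longrightarrow> 0 \<le> Kn p0 pO pT dh n s' a' ob a"
  unfolding Kn_def
  by (intro sum_nonneg mult_nonneg_nonneg Wnn') (auto intro!: sum_nonneg mult_nonneg_nonneg pOnn' dhnn' histx_len)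

lemma nuF: assumes "1 \<le> t" shows "nu p0 (msasF p0 pO pT dh) t s = Pn p0 pO pT dh (t - 1) s"
proof (cases t)
  case 0 then show ?thesis using assms by simp
next
  case (Suc n)
  show ?thesis
  proof (cases n)
    case 0 then show ?thesis using Suc P0[OF pom val] by (simp add: nu_def)
  next
    case (Suc m)
    then show ?thesis using \<open>t = Suc n\<close> Pstep[OF pom val, of m s]
      by (simp add: nu_def msasF_def)
  qed
qed

lemma pcond_MC: "MCn p0 pO pT dh n s' a' s ob a =
   pcond pO pT s s' a' ob * (\<Sum>sb\<in>UNIV. MCn p0 pO pT dh n s' a' sb ob a)"
proof -
  define D where "D = (\<Sum>sb\<in>UNIV. pO sb ob * pT s' a' sb)"
  define K where "K = Kn p0 pO pT dh n s' a' ob a"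
  have S: "(\<Sum>sb\<in>UNIV. MCn p0 pO pT dh n s' a' sb ob a) = D * K"
    unfolding MCn_def D_def K_def by (simp add: sum_distrib_right)
  show ?thesis
  proof (cases "D = 0")
    case True
    have "pO s ob * pT s' a' s \<le> D" unfolding D_def
      by (rule member_le_sum) (auto intro: mult_nonneg_nonneg pOnn' pTnn')
    moreover have "0 \<le> pO s ob * pT s' a' s" by (intro mult_nonneg_nonneg pOnn' pTnn')
    ultimately have "pO s ob * pT s' a' s = 0" using True by simp
    then show ?thesis by (auto simp: MCn_def pcond_def)
  next
    case False
    show ?thesis unfolding S using False by (simp add: pcond_def D_def[symmetric] MCn_def K_def[symmetric])
  qed
qed

lemma partF:
  "relaxc_feasible T p0 pO pT p0 (msoaF p0 pO pT dh) (msasF p0 pO pT dh) (deltaF p0 pO pT dh) (mcF p0 pO pT dh)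
   \<and> objective T r (msasF p0 pO pT dh) = exp_reward T p0 pO pT r dh"
proof -
  have Q: "\<And>t. t \<in> {1..T} \<Longrightarrow> Suc (t - 1) \<le> T" by auto
  have tot: "\<And>t. t \<in> {1..T} \<Longrightarrow> (\<Sum>s\<in>UNIV. \<Sum>ob\<in>UNIV. \<Sum>a\<in>UNIV. Qn p0 pO pT dh (t - 1) s ob a) \<le> 1"
    using QPP[OF pom val] Ptot[OF pom val] Q by (simp add: Suc_le_lessD less_imp_le_nat)
  have mp: "\<And>t a ob s. t \<in> {1..T} \<Longrightarrow>
      0 \<le> mcd (Qn p0 pO pT dh (t - 1)) a ob \<and> mcd (Qn p0 pO pT dh (t - 1)) a ob \<le> 1 \<and>
      (\<Sum>a\<in>UNIV. mcd (Qn p0 pO pT dh (t - 1)) a ob) = 1 \<and>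
      Qn p0 pO pT dh (t - 1) s ob a \<le> mcd (Qn p0 pO pT dh (t - 1)) a ob \<and>
      (\<Sum>a'\<in>UNIV. Qn p0 pO pT dh (t - 1) s ob a') + mcd (Qn p0 pO pT dh (t - 1)) a ob - 1 \<le> Qn p0 pO pT dh (t - 1) s ob a"
    using mcd_props[OF Qn_nn tot] Q by blast
  have rel: "relax_feasible T p0 pO pT p0 (msoaF p0 pO pT dh) (msasF p0 pO pT dh) (deltaF p0 pO pT dh)"
    unfolding relax_feasible_def
  proof (intro conjI ballI allI)
    fix s show "0 \<le> p0 s" by (rule p0nn')
  next
    fix t s ob a assume t: "t \<in> {1..T}" show "0 \<le> msoaF p0 pO pT dh t s ob a"
      unfolding msoaF_def using Qn_nn Q[OF t] by blast
  next
    fix t s a s' assume t: "t \<in> {1..T}" show "0 \<le> msasF p0 pO pT dh t s a s'"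
      unfolding msasF_def using MSn_nn Q[OF t] by blast
  next
    fix t a ob assume t: "t \<in> {1..T}" show "0 \<le> deltaF p0 pO pT dh t a ob"
      unfolding deltaF_def using mp[OF t] by blast
  next
    fix t a ob assume t: "t \<in> {1..T}" show "deltaF p0 pO pT dh t a ob \<le> 1"
      unfolding deltaF_def using mp[OF t] by blast
  next
    fix t ob assume t: "t \<in> {1..T}" show "(\<Sum>a\<in>UNIV. deltaF p0 pO pT dh t a ob) = 1"
      unfolding deltaF_def using mp[OF t] by blast
  next
    fix s show "p0 s = p0 s" by simp
  next
    fix t s assume t: "t \<in> {1..T}"
    show "(\<Sum>ob\<in>UNIV. \<Sum>a\<in>UNIV. msoaF p0 pO pT dh t s ob a) = nu p0 (msasF p0 pO pT dh) t s"
      unfolding msoaF_def using QPP[OF pom val Q[OF t]] nuF t by simp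
  next
    fix t s a assume t: "t \<in> {1..T}"
    show "(\<Sum>sb\<in>UNIV. msasF p0 pO pT dh t s a sb) = (\<Sum>ob\<in>UNIV. msoaF p0 pO pT dh t s ob a)"
      unfolding msasF_def msoaF_def MSn_def by (simp add: pTsum' flip: sum_distrib_left)
  next
    fix t s a s' assume t: "t \<in> {1..T}"
    show "msasF p0 pO pT dh t s a s' = pT s a s' * (\<Sum>sb\<in>UNIV. msasF p0 pO pT dh t s a sb)"
      unfolding msasF_def MSn_def by (simp add: pTsum' flip: sum_distrib_left)
  next
    fix t s ob a assume t: "t \<in> {1..T}"
    have nq: "pO s ob * nu p0 (msasF p0 pO pT dh) t s = (\<Sum>a'\<in>UNIV. Qn p0 pO pT dh (t - 1) s ob a')"
      using QP[OF pom val Q[OF t]] nuF t by simp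
    have le: "Qn p0 pO pT dh (t - 1) s ob a \<le> (\<Sum>a'\<in>UNIV. Qn p0 pO pT dh (t - 1) s ob a')"
      by (rule member_le_sum) (use Qn_nn[OF Q[OF t]] in auto)
    show "msoaF p0 pO pT dh t s ob a \<le> pO s ob * nu p0 (msasF p0 pO pT dh) t s"
      unfolding msoaF_def nq using le by simp
  next
    fix t s ob a assume t: "t \<in> {1..T}"
    show "msoaF p0 pO pT dh t s ob a \<le> deltaF p0 pO pT dh t a ob"
      unfolding msoaF_def deltaF_def using mp[OF t, of a ob s] by simp
  next
    fix t s ob a assume t: "t \<in> {1..T}"
    have nq: "pO s ob * nu p0 (msasF p0 pO pT dh) t s = (\<Sum>a'\<in>UNIV. Qn p0 pO pT dh (t - 1) s ob a')"
      using QP[OF pom val Q[OF t]] nuF t by simp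
    show "pO s ob * nu p0 (msasF p0 pO pT dh) t s + deltaF p0 pO pT dh t a ob - 1 \<le> msoaF p0 pO pT dh t s ob a"
      unfolding msoaF_def deltaF_def nq using mp[OF t, of a ob s] by simp
  qed
  have rc: "relaxc_feasible T p0 pO pT p0 (msoaF p0 pO pT dh) (msasF p0 pO pT dh) (deltaF p0 pO pT dh) (mcF p0 pO pT dh)"
    unfolding relaxc_feasible_def
  proof (intro conjI ballI allI rel)
    fix t s' a' s ob a assume t: "t \<in> {2..T}"
    then have tt: "Suc (Suc (t - 2)) \<le> T" by auto
    show "0 \<le> mcF p0 pO pT dh t s' a' s ob a"
      unfolding mcF_def MCn_def using Kn_nn[OF tt] by (intro mult_nonneg_nonneg pOnn' pTnn') auto
  next
    fix t s ob a assume t: "t \<in> {2..T}"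
    then have e: "t - 1 = Suc (t - 2)" by auto
    show "(\<Sum>s'\<in>UNIV. \<Sum>a'\<in>UNIV. mcF p0 pO pT dh t s' a' s ob a) = msoaF p0 pO pT dh t s ob a"
      unfolding mcF_def msoaF_def e by (rule MC1[OF pom val])
  next
    fix t s' a' s ob assume t: "t \<in> {2..T}"
    then have tt: "Suc (Suc (t - 2)) \<le> T" and e: "t - 1 - 1 = t - 2" by auto
    show "(\<Sum>a\<in>UNIV. mcF p0 pO pT dh t s' a' s ob a) = pO s ob * msasF p0 pO pT dh (t - 1) s' a' s"
      unfolding mcF_def msasF_def e by (rule MC2[OF pom val tt])
  next
    fix t s' a' s ob a assume t: "t \<in> {2..T}"
    show "mcF p0 pO pT dh t s' a' s ob a = pcond pO pT s s' a' ob * (\<Sum>sb\<in>UNIV. mcF p0 pO pT dh t s' a' sb ob a)"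
      unfolding mcF_def by (rule pcond_MC)
  qed
  have "msasF p0 pO pT dh = (\<lambda>t. MSn p0 pO pT dh (t - 1))" by (rule ext) (simp add: msasF_def)
  then show ?thesis using rc obj_eq[OF pom val, of r] by simp
qed

end

lemma mass:
  fixes m1 :: "'s::finite \<Rightarrow> real" and msas :: "nat \<Rightarrow> 's \<Rightarrow> 'a::finite \<Rightarrow> 's \<Rightarrow> real"
  assumes fl: "\<forall>t\<in>{1..T}. \<forall>s. (\<Sum>a\<in>UNIV. \<Sum>s'\<in>UNIV. msas t s a s') = nu m1 msas t s"
    and m1: "(\<Sum>s\<in>UNIV. m1 s) = 1"
  shows "1 \<le> t \<Longrightarrow> t \<le> T \<Longrightarrow> (\<Sum>s\<in>UNIV. nu m1 msas t s) = 1"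
proof (induction t rule: dec_induct)
  case base then show ?case using m1 by (simp add: nu_def)
next
  case (step k)
  have "(\<Sum>s\<in>UNIV. nu m1 msas (Suc k) s) = (\<Sum>s\<in>UNIV. \<Sum>s''\<in>UNIV. \<Sum>a''\<in>UNIV. msas k s'' a'' s)"
    using step by (simp add: nu_def)
  also have "\<dots> = (\<Sum>s''\<in>UNIV. \<Sum>a''\<in>UNIV. \<Sum>s\<in>UNIV. msas k s'' a'' s)" by (rule pull3[symmetric])
  also have "\<dots> = (\<Sum>s''\<in>UNIV. nu m1 msas k s'')" using fl step by simp
  finally show ?case using step by simp
qed

lemma relaxD1:
  assumes "relax_feasible T p0 pO pT m1 msoa msas delta"
  shows "\<forall>s. 0 \<le> m1 s"
  using assms unfolding relax_feasible_def by (elim conjE) assumption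

lemma relaxD2:
  assumes "relax_feasible T p0 pO pT m1 msoa msas delta"
  shows "\<forall>t\<in>{1..T}. \<forall>s ob a. 0 \<le> msoa t s ob a"
  using assms unfolding relax_feasible_def by (elim conjE) assumption

lemma relaxD3:
  assumes "relax_feasible T p0 pO pT m1 msoa msas delta"
  shows "\<forall>t\<in>{1..T}. \<forall>s a s'. 0 \<le> msas t s a s'"
  using assms unfolding relax_feasible_def by (elim conjE) assumption

lemma relaxD4:
  assumes "relax_feasible T p0 pO pT m1 msoa msas delta"
  shows "\<forall>t\<in>{1..T}. \<forall>a ob. 0 \<le> delta t a ob \<and> delta t a ob \<le> 1"
  using assms unfolding relax_feasible_def by (elim conjE) assumption

lemma relaxD5:
  assumes "relax_feasible T p0 pO pT m1 msoa msas delta"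
  shows "\<forall>t\<in>{1..T}. \<forall>ob. (\<Sum>a\<in>UNIV. delta t a ob) = 1"
  using assms unfolding relax_feasible_def by (elim conjE) assumption

lemma relaxD6:
  assumes "relax_feasible T p0 pO pT m1 msoa msas delta"
  shows "\<forall>s. m1 s = p0 s"
  using assms unfolding relax_feasible_def by (elim conjE) assumption

lemma relaxD7:
  assumes "relax_feasible T p0 pO pT m1 msoa msas delta"
  shows "\<forall>t\<in>{1..T}. \<forall>s. (\<Sum>ob\<in>UNIV. \<Sum>a\<in>UNIV. msoa t s ob a) = nu m1 msas t s"
  using assms unfolding relax_feasible_def by (elim conjE) assumption

lemma relaxD8:
  assumes "relax_feasible T p0 pO pT m1 msoa msas delta"
  shows "\<forall>t\<in>{1..T}. \<forall>s a. (\<Sum>sb\<in>UNIV. msas t s a sb) = (\<Sum>ob\<in>UNIV. msoa t s ob a)"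
  using assms unfolding relax_feasible_def by (elim conjE) assumption

lemma relaxD9:
  assumes "relax_feasible T p0 pO pT m1 msoa msas delta"
  shows "\<forall>t\<in>{1..T}. \<forall>s a s'. msas t s a s' = pT s a s' * (\<Sum>sb\<in>UNIV. msas t s a sb)"
  using assms unfolding relax_feasible_def by (elim conjE) assumption

lemma relaxD10:
  assumes "relax_feasible T p0 pO pT m1 msoa msas delta"
  shows "\<forall>t\<in>{1..T}. \<forall>s ob a.
        msoa t s ob a \<le> pO s ob * nu m1 msas t s \<and>
        msoa t s ob a \<le> delta t a ob \<and>
        pO s ob * nu m1 msas t s + delta t a ob - 1 \<le> msoa t s ob a"
  using assms unfolding relax_feasible_def by (elim conjE) assumption

lemmas relaxD = relaxD1 relaxD2 relaxD3 relaxD4 relaxD5 relaxD6 relaxD7 relaxD8 relaxD9 relaxD10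

lemma relax_flow:
  assumes "relax_feasible T p0 pO pT m1 msoa msas delta"
  shows "\<forall>t\<in>{1..T}. \<forall>s. (\<Sum>a\<in>UNIV. \<Sum>s'\<in>UNIV. msas t s a s') = nu m1 msas t s"
proof (intro ballI allI)
  fix t s assume t: "t \<in> {1..T}"
  have "(\<Sum>a\<in>UNIV. \<Sum>s'\<in>UNIV. msas t s a s') = (\<Sum>a\<in>UNIV. \<Sum>ob\<in>UNIV. msoa t s ob a)"
    using relaxD(8)[OF assms] t by simp
  also have "\<dots> = (\<Sum>ob\<in>UNIV. \<Sum>a\<in>UNIV. msoa t s ob a)" by (rule sum.swap)
  also have "\<dots> = nu m1 msas t s" using relaxD(7)[OF assms] t by simp
  finally show "(\<Sum>a\<in>UNIV. \<Sum>s'\<in>UNIV. msas t s a s') = nu m1 msas t s" .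
qed

lemma nu_nn:
  assumes m1: "\<forall>s. 0 \<le> m1 s" and ms: "\<forall>t\<in>{1..T}. \<forall>s a s'. 0 \<le> msas t s a s'"
  shows "1 \<le> t \<Longrightarrow> t \<le> T \<Longrightarrow> 0 \<le> nu m1 msas t s"
proof -
  assume t: "1 \<le> t" "t \<le> T"
  show ?thesis
  proof (cases "t = 1")
    case True then show ?thesis using m1 by (simp add: nu_def)
  next
    case False
    then have "t - 1 \<in> {1..T}" using t by auto
    then show ?thesis using False ms by (auto simp: nu_def intro!: sum_nonneg)
  qed
qed

lemma flow_bound:
  fixes m1 :: "'s::finite \<Rightarrow> real" and msas :: "nat \<Rightarrow> 's \<Rightarrow> 'a::finite \<Rightarrow> 's \<Rightarrow> real"
  assumes fl: "\<forall>t\<in>{1..T}. \<forall>s. (\<Sum>a\<in>UNIV. \<Sum>s'\<in>UNIV. msas t s a s') = nu m1 msas t s"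
    and m1s: "(\<Sum>s\<in>UNIV. m1 s) = 1"
    and m1: "\<forall>s. 0 \<le> m1 s" and ms: "\<forall>t\<in>{1..T}. \<forall>s a s'. 0 \<le> msas t s a s'"
  shows "objective T r msas \<le> (\<Sum>t=1..T. \<Sum>s\<in>UNIV. \<Sum>a\<in>UNIV. \<Sum>s'\<in>UNIV. \<bar>r s a s'\<bar>)"
  unfolding objective_def
proof (intro sum_mono)
  fix t s a s' assume t: "t \<in> {1..T}"
  have "msas t s a s' \<le> (\<Sum>s'\<in>UNIV. msas t s a s')"
    by (rule member_le_sum) (use ms t in auto)
  also have "\<dots> \<le> (\<Sum>a\<in>UNIV. \<Sum>s'\<in>UNIV. msas t s a s')"
    by (rule member_le_sum[where f="\<lambda>a. \<Sum>s'\<in>UNIV. msas t s a s'"]) (use ms t in \<open>auto intro: sum_nonneg\<close>)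
  also have "\<dots> = nu m1 msas t s" using fl t by simp
  also have "\<dots> \<le> (\<Sum>s\<in>UNIV. nu m1 msas t s)"
    by (rule member_le_sum) (use nu_nn[OF m1 ms] t in auto)
  also have "\<dots> = 1" using mass[OF fl m1s] t by auto
  finally have le1: "msas t s a s' \<le> 1" .
  have nn: "0 \<le> msas t s a s'" using ms t by auto
  have "r s a s' * msas t s a s' \<le> \<bar>r s a s'\<bar> * msas t s a s'"
    using nn by (simp add: mult_right_mono)
  also have "\<dots> \<le> \<bar>r s a s'\<bar>" using le1 nn by (simp add: mult_left_le)
  finally show "r s a s' * msas t s a s' \<le> \<bar>r s a s'\<bar>" .
qed

lemma relax_bound:
  assumes pom: "is_pomdp p0 pO pT" and rf: "relax_feasible T p0 pO pT m1 msoa msas delta"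
  shows "objective T r msas \<le> (\<Sum>t=1..T. \<Sum>s\<in>UNIV. \<Sum>a\<in>UNIV. \<Sum>s'\<in>UNIV. \<bar>r s a s'\<bar>)"
proof (rule flow_bound[OF relax_flow[OF rf]])
  show "(\<Sum>s\<in>UNIV. m1 s) = 1" using relaxD(6)[OF rf] pom unfolding is_pomdp_def by simp
  show "\<forall>s. 0 \<le> m1 s" "\<forall>t\<in>{1..T}. \<forall>s a s'. 0 \<le> msas t s a s'"
    using relaxD1[OF rf] relaxD3[OF rf] by auto
qed

lemma part1:
  assumes rf: "relax_feasible T p0 pO pT m1 msoa msas delta" and T1: "1 \<le> T"
  shows "mdp_feasible T p0 pT m1 msas"
proof -
  have fl: "\<forall>t\<in>{1..T}. \<forall>s. (\<Sum>a\<in>UNIV. \<Sum>s'\<in>UNIV. msas t s a s') = nu m1 msas t s" by (rule relax_flow[OF rf])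
  show ?thesis unfolding mdp_feasible_def
  proof (intro conjI ballI allI)
    show "\<And>s. 0 \<le> m1 s" "\<And>t s a s'. t \<in> {1..T} \<Longrightarrow> 0 \<le> msas t s a s'" "\<And>s. m1 s = p0 s"
      using relaxD1[OF rf] relaxD3[OF rf] relaxD6[OF rf] by auto
    show "\<And>t s a s'. t \<in> {1..T} \<Longrightarrow> msas t s a s' = pT s a s' * (\<Sum>sb\<in>UNIV. msas t s a sb)"
      using relaxD9[OF rf] by blast
  next
    fix s
    show "(\<Sum>a\<in>UNIV. \<Sum>s'\<in>UNIV. msas 1 s a s') = m1 s"
      using fl T1 by (auto simp: nu_def)
  next
    fix t s assume t: "t \<in> {2..T}"
    then show "(\<Sum>a\<in>UNIV. \<Sum>s'\<in>UNIV. msas t s a s') = (\<Sum>s''\<in>UNIV. \<Sum>a''\<in>UNIV. msas (t - 1) s'' a'' s)"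
      using fl by (auto simp: nu_def)
  qed
qed

lemma mdpD1: "mdp_feasible T p0 pT m1 msas \<Longrightarrow> \<forall>s. 0 \<le> m1 s"
  unfolding mdp_feasible_def by (elim conjE) assumption
lemma mdpD2: "mdp_feasible T p0 pT m1 msas \<Longrightarrow> \<forall>t\<in>{1..T}. \<forall>s a s'. 0 \<le> msas t s a s'"
  unfolding mdp_feasible_def by (elim conjE) assumption
lemma mdpD3: "mdp_feasible T p0 pT m1 msas \<Longrightarrow> \<forall>s. m1 s = p0 s"
  unfolding mdp_feasible_def by (elim conjE) assumption
lemma mdpD4: "mdp_feasible T p0 pT m1 msas \<Longrightarrow> \<forall>s. (\<Sum>a\<in>UNIV. \<Sum>s'\<in>UNIV. msas 1 s a s') = m1 s"
  unfolding mdp_feasible_def by (elim conjE) assumption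
lemma mdpD5: "mdp_feasible T p0 pT m1 msas \<Longrightarrow> \<forall>t\<in>{2..T}. \<forall>s. (\<Sum>a\<in>UNIV. \<Sum>s'\<in>UNIV. msas t s a s')
                      = (\<Sum>s''\<in>UNIV. \<Sum>a''\<in>UNIV. msas (t - 1) s'' a'' s)"
  unfolding mdp_feasible_def by (elim conjE) assumption
lemma mdpD6: "mdp_feasible T p0 pT m1 msas \<Longrightarrow> \<forall>t\<in>{1..T}. \<forall>s a s'. msas t s a s' = pT s a s' * (\<Sum>sb\<in>UNIV. msas t s a sb)"
  unfolding mdp_feasible_def by (elim conjE) assumption

lemma mdp_flow:
  assumes md: "mdp_feasible T p0 pT m1 msas"
  shows "\<forall>t\<in>{1..T}. \<forall>s. (\<Sum>a\<in>UNIV. \<Sum>s'\<in>UNIV. msas t s a s') = nu m1 msas t s"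
proof (intro ballI allI)
  fix t s assume t: "t \<in> {1..T}"
  show "(\<Sum>a\<in>UNIV. \<Sum>s'\<in>UNIV. msas t s a s') = nu m1 msas t s"
  proof (cases "t = 1")
    case True then show ?thesis using mdpD4[OF md] by (simp add: nu_def)
  next
    case False
    then have "t \<in> {2..T}" using t by auto
    then show ?thesis using mdpD5[OF md] False by (simp add: nu_def)
  qed
qed

lemma part2:
  fixes p0 :: "'s::finite \<Rightarrow> real" and pO :: "'s \<Rightarrow> 'o::finite \<Rightarrow> real"
    and pT :: "'s \<Rightarrow> 'a::finite \<Rightarrow> 's \<Rightarrow> real"
  assumes pom: "is_pomdp p0 pO pT" and md: "mdp_feasible T p0 pT m1 msas"
  shows "relax_feasible T p0 pO pT m1 (\<lambda>t s ob a. pO s ob * (\<Sum>sb\<in>UNIV. msas t s a sb)) msas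
     (\<lambda>t. mcd (\<lambda>s ob a. pO s ob * (\<Sum>sb\<in>UNIV. msas t s a sb)))"
proof -
  define X where "X = (\<lambda>t s a. \<Sum>sb\<in>UNIV. msas t s a sb)"
  define mu where "mu = (\<lambda>t s ob a. pO s ob * X t s a)"
  have pOnn: "\<And>s ob. 0 \<le> pO s ob" and pOs: "\<And>s. (\<Sum>ob\<in>UNIV. pO s ob) = 1"
    and p0s: "(\<Sum>s\<in>UNIV. p0 s) = 1"
    using pom unfolding is_pomdp_def by auto
  have fl: "\<forall>t\<in>{1..T}. \<forall>s. (\<Sum>a\<in>UNIV. \<Sum>s'\<in>UNIV. msas t s a s') = nu m1 msas t s" by (rule mdp_flow[OF md])
  have m1s: "(\<Sum>s\<in>UNIV. m1 s) = 1" using mdpD3[OF md] p0s by simp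
  have Xnu: "\<And>t s. t \<in> {1..T} \<Longrightarrow> (\<Sum>a\<in>UNIV. X t s a) = nu m1 msas t s" using fl by (simp add: X_def)
  have Xnn: "\<And>t s a. t \<in> {1..T} \<Longrightarrow> 0 \<le> X t s a" unfolding X_def using mdpD2[OF md] by (auto intro: sum_nonneg)
  have munn: "\<And>t s ob a. t \<in> {1..T} \<Longrightarrow> 0 \<le> mu t s ob a" unfolding mu_def using Xnn pOnn by (simp add: mult_nonneg_nonneg)
  have mum: "\<And>t s ob. t \<in> {1..T} \<Longrightarrow> (\<Sum>a\<in>UNIV. mu t s ob a) = pO s ob * nu m1 msas t s"
    unfolding mu_def by (simp add: Xnu flip: sum_distrib_left)
  have mutot: "\<And>t. t \<in> {1..T} \<Longrightarrow> (\<Sum>s\<in>UNIV. \<Sum>ob\<in>UNIV. \<Sum>a\<in>UNIV. mu t s ob a) \<le> 1"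
    using mass[OF fl m1s] by (simp add: mum pOs flip: sum_distrib_right)
  have mp: "\<And>t a ob s. t \<in> {1..T} \<Longrightarrow>
      0 \<le> mcd (mu t) a ob \<and> mcd (mu t) a ob \<le> 1 \<and> (\<Sum>a\<in>UNIV. mcd (mu t) a ob) = 1 \<and>
      mu t s ob a \<le> mcd (mu t) a ob \<and> (\<Sum>a'\<in>UNIV. mu t s ob a') + mcd (mu t) a ob - 1 \<le> mu t s ob a"
  proof -
    fix t a ob s assume t: "t \<in> {1..T}"
    have nn: "\<And>s ob a. 0 \<le> mu t s ob a" using munn[OF t] .
    show "0 \<le> mcd (mu t) a ob \<and> mcd (mu t) a ob \<le> 1 \<and> (\<Sum>a\<in>UNIV. mcd (mu t) a ob) = 1 \<and>
      mu t s ob a \<le> mcd (mu t) a ob \<and> (\<Sum>a'\<in>UNIV. mu t s ob a') + mcd (mu t) a ob - 1 \<le> mu t s ob a"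
      using mcd_props[of "mu t", OF nn mutot[OF t]] by simp
  qed
  have msoa_eq: "(\<lambda>t s ob a. pO s ob * (\<Sum>sb\<in>UNIV. msas t s a sb)) = mu" unfolding mu_def X_def by simp
  have d_eq: "(\<lambda>t. mcd (\<lambda>s ob a. pO s ob * (\<Sum>sb\<in>UNIV. msas t s a sb))) = (\<lambda>t. mcd (mu t))"
    unfolding mu_def X_def by simp
  show ?thesis unfolding msoa_eq d_eq relax_feasible_def
  proof (intro conjI ballI allI)
    fix s show "0 \<le> m1 s" using mdpD1[OF md] by auto
  next
    fix t s ob a assume "t \<in> {1..T}" then show "0 \<le> mu t s ob a" by (rule munn)
  next
    fix t s a s' assume "t \<in> {1..T}" then show "0 \<le> msas t s a s'" using mdpD2[OF md] by auto
  next
    fix t a ob assume "t \<in> {1..T}" then show "0 \<le> mcd (mu t) a ob" using mp by blast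
  next
    fix t a ob assume "t \<in> {1..T}" then show "mcd (mu t) a ob \<le> 1" using mp by blast
  next
    fix t ob assume "t \<in> {1..T}" then show "(\<Sum>a\<in>UNIV. mcd (mu t) a ob) = 1" using mp by blast
  next
    fix s show "m1 s = p0 s" using mdpD3[OF md] by auto
  next
    fix t s assume t: "t \<in> {1..T}"
    show "(\<Sum>ob\<in>UNIV. \<Sum>a\<in>UNIV. mu t s ob a) = nu m1 msas t s" using t by (simp add: mum pOs flip: sum_distrib_right)
  next
    fix t s a assume t: "t \<in> {1..T}"
    show "(\<Sum>sb\<in>UNIV. msas t s a sb) = (\<Sum>ob\<in>UNIV. mu t s ob a)"
      unfolding mu_def X_def by (simp add: pOs flip: sum_distrib_right)
  next
    fix t s a s' assume t: "t \<in> {1..T}"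
    show "msas t s a s' = pT s a s' * (\<Sum>sb\<in>UNIV. msas t s a sb)" using mdpD6[OF md] t by blast
  next
    fix t s ob a assume t: "t \<in> {1..T}"
    show "mu t s ob a \<le> pO s ob * nu m1 msas t s"
      unfolding mum[OF t, symmetric] by (rule member_le_sum) (use munn t in auto)
  next
    fix t s ob a assume t: "t \<in> {1..T}"
    show "mu t s ob a \<le> mcd (mu t) a ob" using mp[OF t] by blast
  next
    fix t s ob a assume t: "t \<in> {1..T}"
    show "pO s ob * nu m1 msas t s + mcd (mu t) a ob - 1 \<le> mu t s ob a"
      using mp[OF t, of a ob s] mum[OF t, of s ob] by simp
  qed
qed

lemma Qn_memless:
  fixes p0 :: "'s \<Rightarrow> real" and dh :: "nat \<Rightarrow> ('o \<times> 'a) list \<Rightarrow> 'o \<Rightarrow> 'a \<Rightarrow> real"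
  assumes "\<And>t h ob a. dh t h ob a = g t ob a"
  shows "Qn p0 pO pT dh n s ob a = pO s ob * g (Suc n) ob a * Pn p0 pO pT dh n s"
proof -
  have "pO s ob * g (Suc n) ob a * Pn p0 pO pT dh n s = (\<Sum>x\<in>Lk n. pO s ob * g (Suc n) ob a *
     (tpx p0 pO pT dh n x * (if last (fst x) = s then 1 else 0)))"
    unfolding Pn_def by (simp add: sum_distrib_left)
  also have "\<dots> = Qn p0 pO pT dh n s ob a"
    unfolding Qn_def by (rule sum.cong[OF refl]) (simp add: assms)
  finally show ?thesis by simp
qed

lemma mcd_bin:
  fixes \<mu> :: "'s::finite \<Rightarrow> 'o \<Rightarrow> 'a::finite \<Rightarrow> real"
  assumes "\<And>s ob a. \<mu> s ob a = c s ob * (if a = undefined then 1 else 0)"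
  shows "mcd \<mu> a ob \<in> {0, 1}"
proof -
  have s1: "(\<Sum>a'\<in>UNIV. \<mu> s ob a') = c s ob" for s using assms by (simp add: mult_ind)
  have s2: "(\<Sum>s\<in>UNIV. \<mu> s ob a) = (if a = undefined then (\<Sum>s\<in>UNIV. c s ob) else 0)"
    using assms by (simp add: mult_ind)
  show ?thesis unfolding mcd_def s1 s2 by simp
qed

lemma milp_force:
  assumes mf: "milp_feasible T p0 pO pT m1 msoa msas delta" and t: "t \<in> {1..T}"
  shows "msoa t s ob a = pO s ob * nu m1 msas t s * delta t a ob"
proof -
  have rf: "relax_feasible T p0 pO pT m1 msoa msas delta" and bin: "delta t a ob \<in> {0,1}"
    using mf t unfolding milp_feasible_def by auto
  have mc: "msoa t s ob a \<le> pO s ob * nu m1 msas t s" "msoa t s ob a \<le> delta t a ob"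
     "pO s ob * nu m1 msas t s + delta t a ob - 1 \<le> msoa t s ob a"
    using relaxD10[OF rf] t by blast+
  have nn: "0 \<le> msoa t s ob a" using relaxD2[OF rf] t by blast
  show ?thesis using bin mc nn by auto
qed

lemma part4:
  fixes p0 :: "'s::finite \<Rightarrow> real" and pO :: "'s \<Rightarrow> 'o::finite \<Rightarrow> real"
    and pT :: "'s \<Rightarrow> 'a::finite \<Rightarrow> 's \<Rightarrow> real"
  assumes pom: "is_pomdp p0 pO pT" and mf: "milp_feasible T p0 pO pT m1 msoa msas delta"
  shows "valid_his_policy T (\<lambda>t h ob a. delta t a ob) \<and>
    exp_reward T p0 pO pT r (\<lambda>t h ob a. delta t a ob) = objective T r msas"
proof -
  define dh where "dh = (\<lambda>(t::nat) (h::('o\<times>'a) list) ob a. delta t a ob)"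
  have rf: "relax_feasible T p0 pO pT m1 msoa msas delta" using mf unfolding milp_feasible_def by auto
  have val: "valid_his_policy T dh" unfolding valid_his_policy_def dh_def
    using relaxD4[OF rf] relaxD5[OF rf] by auto
  have Q: "Qn p0 pO pT dh n s ob a = pO s ob * delta (Suc n) a ob * Pn p0 pO pT dh n s" for n s ob a
    by (rule Qn_memless) (simp add: dh_def)
  have MS: "MSn p0 pO pT dh n s a s' = msas (Suc n) s a s'"
    if n: "Suc n \<le> T" and P: "\<And>s. Pn p0 pO pT dh n s = nu m1 msas (Suc n) s" for n s a s'
  proof -
    have t: "Suc n \<in> {1..T}" using n by auto
    have "msas (Suc n) s a s' = pT s a s' * (\<Sum>sb\<in>UNIV. msas (Suc n) s a sb)" using relaxD9[OF rf] t by blast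
    also have "(\<Sum>sb\<in>UNIV. msas (Suc n) s a sb) = (\<Sum>ob\<in>UNIV. msoa (Suc n) s ob a)" using relaxD8[OF rf] t by blast
    also have "\<dots> = (\<Sum>ob\<in>UNIV. pO s ob * nu m1 msas (Suc n) s * delta (Suc n) a ob)"
      using milp_force[OF mf t] by simp
    finally show ?thesis unfolding MSn_def Q P by (simp add: ac_simps)
  qed
  have PN: "Suc n \<le> T \<Longrightarrow> Pn p0 pO pT dh n s = nu m1 msas (Suc n) s" for n s
  proof (induction n arbitrary: s)
    case 0 then show ?case using P0[OF pom val] relaxD6[OF rf] by (simp add: nu_def)
  next
    case (Suc n)
    have "Pn p0 pO pT dh (Suc n) s = (\<Sum>s0\<in>UNIV. \<Sum>a\<in>UNIV. MSn p0 pO pT dh n s0 a s)" by (rule Pstep[OF pom val])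
    also have "\<dots> = (\<Sum>s0\<in>UNIV. \<Sum>a\<in>UNIV. msas (Suc n) s0 a s)"
      using MS[of n] Suc by simp
    finally show ?case by (simp add: nu_def)
  qed
  have "exp_reward T p0 pO pT r dh = objective T r (\<lambda>t. MSn p0 pO pT dh (t - 1))" by (rule obj_eq[OF pom val])
  also have "\<dots> = objective T r msas" unfolding objective_def
  proof (rule sum.cong[OF refl])
    fix t assume t: "t \<in> {1..T}"
    then have e: "Suc (t - 1) = t" and n: "Suc (t - 1) \<le> T" by auto
    show "(\<Sum>s\<in>UNIV. \<Sum>a\<in>UNIV. \<Sum>s'\<in>UNIV. r s a s' * MSn p0 pO pT dh (t - 1) s a s') =
          (\<Sum>s\<in>UNIV. \<Sum>a\<in>UNIV. \<Sum>s'\<in>UNIV. r s a s' * msas t s a s')"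
      using MS[OF n PN[OF n]] e by simp
  qed
  finally show ?thesis using val unfolding dh_def by simp
qed

definition dh0 :: "nat \<Rightarrow> ('o \<times> 'a) list \<Rightarrow> 'o \<Rightarrow> 'a \<Rightarrow> real" where
  "dh0 t h ob a = (if a = undefined then 1 else 0)"

lemma dh0_valid: "valid_his_policy T dh0"
  unfolding valid_his_policy_def dh0_def by simp

lemma dh0_milp:
  fixes p0 :: "'s::finite \<Rightarrow> real" and pO :: "'s \<Rightarrow> 'o::finite \<Rightarrow> real"
    and pT :: "'s \<Rightarrow> 'a::finite \<Rightarrow> 's \<Rightarrow> real"
  assumes pom: "is_pomdp p0 pO pT"
  shows "milp_feasible T p0 pO pT p0 (msoaF p0 pO pT dh0) (msasF p0 pO pT dh0) (deltaF p0 pO pT dh0)"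
proof -
  have rc: "relaxc_feasible T p0 pO pT p0 (msoaF p0 pO pT dh0) (msasF p0 pO pT dh0) (deltaF p0 pO pT dh0) (mcF p0 pO pT dh0)"
    using partF[OF pom dh0_valid] by blast
  have bin: "deltaF p0 pO pT dh0 t a ob \<in> {0,1}" for t a ob
    unfolding deltaF_def
    by (rule mcd_bin[where c="\<lambda>s ob. pO s ob * Pn p0 pO pT dh0 (t - 1) s"])
       (simp add: Qn_memless[where g="\<lambda>t ob a. if a = undefined then 1 else 0"] dh0_def ac_simps)
  from rc have rel: "relax_feasible T p0 pO pT p0 (msoaF p0 pO pT dh0) (msasF p0 pO pT dh0) (deltaF p0 pO pT dh0)"
    unfolding relaxc_feasible_def by (rule conjunct1)
  show ?thesis unfolding milp_feasible_def using rel bin by blast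
qed

theorem mainTheorem3:
  fixes p0 :: "'s::finite \<Rightarrow> real" and pO :: "'s \<Rightarrow> 'o::finite \<Rightarrow> real"
    and pT :: "'s \<Rightarrow> 'a::finite \<Rightarrow> 's \<Rightarrow> real" and r :: "'s \<Rightarrow> 'a \<Rightarrow> 's \<Rightarrow> real"
    and T :: nat
  assumes "is_pomdp p0 pO pT" and "1 \<le> T"
  shows "(\<forall>m1 msoa msas delta. relax_feasible T p0 pO pT m1 msoa msas delta \<longrightarrow>
            (\<exists>m1' msas'. mdp_feasible T p0 pT m1' msas' \<and> objective T r msas' = objective T r msas))
       \<and> (\<forall>m1' msas'. mdp_feasible T p0 pT m1' msas' \<longrightarrow>
            (\<exists>m1 msoa msas delta. relax_feasible T p0 pO pT m1 msoa msas delta \<and>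
                objective T r msas = objective T r msas'))
       \<and> z_relax T p0 pO pT r = v_mdp T p0 pT r
       \<and> z_milp T p0 pO pT r \<le> v_his T p0 pO pT r
       \<and> v_his T p0 pO pT r \<le> z_relaxc T p0 pO pT r
       \<and> z_relaxc T p0 pO pT r \<le> z_relax T p0 pO pT r"
proof -
  note pom = assms(1) and T1 = assms(2)
  define Bd where "Bd = (\<Sum>t=1..T. \<Sum>s\<in>UNIV. \<Sum>a\<in>UNIV. \<Sum>s'\<in>UNIV. \<bar>r s a s'\<bar>)"
  define SR where "SR = {objective T r msas | m1 msoa msas delta. relax_feasible T p0 pO pT m1 msoa msas delta}"
  define SM where "SM = {objective T r msas | m1 msas. mdp_feasible T p0 pT m1 msas}"
  define SMI where "SMI = {objective T r msas | m1 msoa msas delta. milp_feasible T p0 pO pT m1 msoa msas delta}"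
  define SRC where "SRC = {objective T r msas | m1 msoa msas delta mc. relaxc_feasible T p0 pO pT m1 msoa msas delta mc}"
  define SH where "SH = {exp_reward T p0 pO pT r dh | dh. valid_his_policy T dh}"
  have P1: "\<forall>m1 msoa msas delta. relax_feasible T p0 pO pT m1 msoa msas delta \<longrightarrow>
            (\<exists>m1' msas'. mdp_feasible T p0 pT m1' msas' \<and> objective T r msas' = objective T r msas)"
    using part1 T1 by blast
  have P2: "\<forall>m1' msas'. mdp_feasible T p0 pT m1' msas' \<longrightarrow>
            (\<exists>m1 msoa msas delta. relax_feasible T p0 pO pT m1 msoa msas delta \<and>
                objective T r msas = objective T r msas')"
    using part2[OF pom] by blast
  have "SR = SM"
  proof (rule set_eqI)
    fix v
    show "v \<in> SR \<longleftrightarrow> v \<in> SM"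
    proof
      assume "v \<in> SR"
      then obtain m1 msoa msas delta where h: "relax_feasible T p0 pO pT m1 msoa msas delta" "v = objective T r msas"
        unfolding SR_def by blast
      then obtain m1' msas' where "mdp_feasible T p0 pT m1' msas'" "objective T r msas' = objective T r msas"
        using P1 by blast
      then show "v \<in> SM" using h(2) unfolding SM_def by (metis (mono_tags, lifting) mem_Collect_eq)
    next
      assume "v \<in> SM"
      then obtain m1 msas where h: "mdp_feasible T p0 pT m1 msas" "v = objective T r msas"
        unfolding SM_def by blast
      then obtain m1' msoa' msas' delta' where "relax_feasible T p0 pO pT m1' msoa' msas' delta'"
          "objective T r msas' = objective T r msas"
        using P2 by blast
      then show "v \<in> SR" using h(2) unfolding SR_def by (metis (mono_tags, lifting) mem_Collect_eq)
    qed
  qed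
  then have P3: "z_relax T p0 pO pT r = v_mdp T p0 pT r"
    unfolding z_relax_def v_mdp_def SR_def SM_def by simp
  have bSR: "bdd_above SR"
    unfolding bdd_above_def SR_def using relax_bound[OF pom] by blast
  have rc_r: "relaxc_feasible T p0 pO pT m1 msoa msas delta mc \<Longrightarrow> relax_feasible T p0 pO pT m1 msoa msas delta"
    for m1 msoa msas delta mc unfolding relaxc_feasible_def by (rule conjunct1)
  have bSRC: "bdd_above SRC"
    unfolding bdd_above_def SRC_def using relax_bound[OF pom] rc_r by blast
  have bSH: "bdd_above SH"
  proof -
    have "\<forall>x\<in>SH. x \<le> Bd"
    proof
      fix x assume "x \<in> SH"
      then obtain dh where dh: "valid_his_policy T dh" "x = exp_reward T p0 pO pT r dh" unfolding SH_def by blast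
      have "relax_feasible T p0 pO pT p0 (msoaF p0 pO pT dh) (msasF p0 pO pT dh) (deltaF p0 pO pT dh)"
        using partF[OF pom dh(1)] rc_r by blast
      then have "objective T r (msasF p0 pO pT dh) \<le> Bd" unfolding Bd_def by (rule relax_bound[OF pom])
      then show "x \<le> Bd" using partF[OF pom dh(1), of r] dh(2) by simp
    qed
    then show ?thesis unfolding bdd_above_def by blast
  qed
  have SMIne: "SMI \<noteq> {}" unfolding SMI_def using dh0_milp[OF pom] by blast
  have SHne: "SH \<noteq> {}" unfolding SH_def using dh0_valid by blast
  have SRCne: "SRC \<noteq> {}" unfolding SRC_def using partF[OF pom dh0_valid] by blast
  have P4: "Sup SMI \<le> Sup SH"
  proof (rule cSup_mono[OF SMIne bSH])
    fix b assume "b \<in> SMI"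
    then obtain m1 msoa msas delta where mf: "milp_feasible T p0 pO pT m1 msoa msas delta" "b = objective T r msas"
      unfolding SMI_def by blast
    have "exp_reward T p0 pO pT r (\<lambda>t h ob a. delta t a ob) \<in> SH"
      unfolding SH_def using part4[OF pom mf(1)] by blast
    then show "\<exists>a\<in>SH. b \<le> a" using part4[OF pom mf(1), of r] mf(2) by force
  qed
  have P5: "Sup SH \<le> Sup SRC"
  proof (rule cSup_mono[OF SHne bSRC])
    fix b assume "b \<in> SH"
    then obtain dh where dh: "valid_his_policy T dh" "b = exp_reward T p0 pO pT r dh" unfolding SH_def by blast
    have "objective T r (msasF p0 pO pT dh) \<in> SRC" unfolding SRC_def using partF[OF pom dh(1)] by blast
    then show "\<exists>a\<in>SRC. b \<le> a" using partF[OF pom dh(1), of r] dh(2) by force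
  qed
  have P6: "Sup SRC \<le> Sup SR"
  proof (rule cSup_mono[OF SRCne bSR])
    fix b assume "b \<in> SRC"
    then have "b \<in> SR" unfolding SRC_def SR_def using rc_r by blast
    then show "\<exists>a\<in>SR. b \<le> a" by blast
  qed
  show ?thesis
    using P1 P2 P3 P4 P5 P6
    unfolding z_milp_def v_his_def z_relaxc_def z_relax_def SMI_def SH_def SRC_def SR_def
    by blast
qed

end
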